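(* Let $n\ge2$, $1\le p\le n-1$, $r\in[n]$, and let $\pi\in S_n$ be a $p$-resultant permutation. There exists $\sigma\in S_{n-1}$ such that the configuration $\sigma^{(r,p)}$ topples to $\pi$ if and only if: (1) if $r\le n-p$, then $r$ is a left-to-right maximum of $\pi^{\text{left}}$; and (2) if $r>n-p$, then $r$ is a right-to-left minimum of $\pi^{\text{right}}$.
   Context: For $m\ge1$, $1\le p\le m$: sites are $0,\dots,m+1$; a configuration in $\mathcal{S}(m,p)$ places $m+1$ distinct chips labeled $1,\dots,m+1$ with sites $0,m+1$ empty, one chip at each site of $\{1,\dots,m\}\setminus\{p\}$ and two chips at site $p$. Toppling: while some site holds at least two chips, choose such a site $i$ and two chips $\alpha<\beta$ there and move $\alpha$ to $i-1$, $\beta$ to $i+1$. It is known this terminates with at most one chip per site and the final configuration is independent of the choices; reading labels left to right gives a permutation in $S_{m+1}$ to which the configuration topples. For $\sigma\in S_m$ and $r\in[m+1]$, $\sigma^{(r,p)}\in\mathcal{S}(m,p)$ places at site $i$ ($1\le i\le m$) chip $\sigma_i$ if $\sigma_i<r$ and $\sigma_i+1$ otherwise, plus chip $r$ at site $p$. $\pi\in S_n$ is $p$-resultant if some configuration in $\mathcal{S}(n-1,p)$ topples to it; then $\pi^{\text{left}}=(\pi_1,\dots,\pi_{n-p})$ is a permutation of $[n-p]$ and $\pi^{\text{right}}=(\pi_{n-p+1},\dots,\pi_n)$ of $\{n-p+1,\dots,n\}$. Left-to-right maximum of $a_1\cdots a_k$: an entry $a_j=\max\{a_1,\dots,a_j\}$;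 right-to-left minimum: an entry $a_j=\min\{a_j,\dots,a_k\}$. *)

theory Defs
  imports Main
begin

text \<open>Configurations: sites are integers (the relevant sites are 0..m+1);
  a configuration assigns to each site the set of (distinct, labelled) chips on it.\<close>
type_synonym config = "int \<Rightarrow> nat set"

text \<open>Permutations of [k] are represented as lists: a list is a permutation of
  {1..k} iff it is distinct with element set {1..k}. Entry i (1-based) is xs ! (i-1).\<close>
definition is_perm :: "nat \<Rightarrow> nat list \<Rightarrow> bool" where
  "is_perm k xs \<longleftrightarrow> distinct xs \<and> set xs = {1..k}"

definition in_S :: "nat \<Rightarrow> nat \<Rightarrow> config \<Rightarrow> bool" where
  "in_S m p C \<longleftrightarrow>
     (\<forall>i. (i < 1 \<or> i > int m) \<longrightarrow> C i = {}) \<and>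
     (\<forall>i. 1 \<le> i \<and> i \<le> int m \<and> i \<noteq> int p \<longrightarrow> card (C i) = 1) \<and>
     card (C (int p)) = 2 \<and>
     (\<forall>i j. i \<noteq> j \<longrightarrow> C i \<inter> C j = {}) \<and>
     (\<Union>i. C i) = {1..m+1}"

definition topple_step :: "config \<Rightarrow> config \<Rightarrow> bool" where
  "topple_step C D \<longleftrightarrow> (\<exists>i a b. a \<in> C i \<and> b \<in> C i \<and> a < b \<and>
     D = C(i := C i - {a, b}, i - 1 := insert a (C (i - 1)), i + 1 := insert b (C (i + 1))))"

definition stable :: "config \<Rightarrow> bool" where
  "stable C \<longleftrightarrow> (\<forall>i. card (C i) \<le> 1)"

definition reading :: "nat \<Rightarrow> config \<Rightarrow> nat list" where
  "reading m C = concat (map (\<lambda>i. sorted_list_of_set (C (int i))) [0..<m+2])"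

text \<open>C (with sites 0..m+1) topples to the permutation pi: toppling terminates in a
  stable configuration (supported on sites 0..m+1) whose reading is pi.
  (Termination and independence of the choices are known facts.)\<close>
definition topples_to :: "nat \<Rightarrow> config \<Rightarrow> nat list \<Rightarrow> bool" where
  "topples_to m C pi \<longleftrightarrow> (\<exists>D. topple_step\<^sup>*\<^sup>* C D \<and> stable D \<and>
      (\<forall>i. D i \<noteq> {} \<longrightarrow> 0 \<le> i \<and> i \<le> int m + 1) \<and> reading m D = pi)"

definition sigma_conf :: "nat list \<Rightarrow> nat \<Rightarrow> nat \<Rightarrow> config" where
  "sigma_conf \<sigma> r p = (\<lambda>i.
     (if 1 \<le> i \<and> i \<le> int (length \<sigma>) then
        {let s = \<sigma> ! (nat i - 1) in if s < r then s else s + 1} else {})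
     \<union> (if i = int p then {r} else {}))"

definition p_resultant :: "nat \<Rightarrow> nat \<Rightarrow> nat list \<Rightarrow> bool" where
  "p_resultant n p pi \<longleftrightarrow> (\<exists>C. in_S (n - 1) p C \<and> topples_to (n - 1) C pi)"

definition ltr_max :: "nat list \<Rightarrow> nat \<Rightarrow> bool" where
  "ltr_max xs a \<longleftrightarrow> (\<exists>j < length xs. xs ! j = a \<and> (\<forall>k \<le> j. xs ! k \<le> a))"

definition rtl_min :: "nat list \<Rightarrow> nat \<Rightarrow> bool" where
  "rtl_min xs a \<longleftrightarrow> (\<exists>j < length xs. xs ! j = a \<and> (\<forall>k. j \<le> k \<and> k < length xs \<longrightarrow> a \<le> xs ! k))"

end

theory Submission
  imports Defs
begin


fun bub :: "nat list \<Rightarrow> nat \<Rightarrow> nat \<times> nat list" where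
  "bub [] c = (c, [])"
| "bub (w # ws) c = (case bub ws c of (c', Q) \<Rightarrow> (min w c', max w c' # Q))"

fun run :: "nat list \<Rightarrow> nat \<Rightarrow> nat \<Rightarrow> nat list \<Rightarrow> nat list \<times> nat list \<times> nat" where
  "run Q s B [] = (case bub Q s of (oo, Q') \<Rightarrow> ([oo], Q', B))"
| "run Q s B (z # zs) = (case bub Q s of (oo, Q') \<Rightarrow>
      (case run Q' (min B z) (max B z) zs of (os, Qf, Bf) \<Rightarrow> (oo # os, Qf, Bf)))"

lemma bub_len: "length (snd (bub ws c)) = length ws"
  by (induction ws) (auto split: prod.splits)

lemma bub_set: "insert (fst (bub ws c)) (set (snd (bub ws c))) = insert c (set ws)"
proof (induction ws)
  case Nil then show ?case by simp
next
  case (Cons w ws)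
  obtain c' Q where e: "bub ws c = (c', Q)" by fastforce
  have "insert c' (set Q) = insert c (set ws)" using Cons e by simp
  moreover have "insert (min w c') (insert (max w c') (set Q)) = insert w (insert c' (set Q))"
    by (cases "w \<le> c'") (auto simp: min_def max_def)
  ultimately show ?case using e by auto
qed

lemma bub_min: "\<forall>x \<in> insert c (set ws). fst (bub ws c) \<le> x"
proof (induction ws)
  case Nil then show ?case by simp
next
  case (Cons w ws)
  obtain c' Q where e: "bub ws c = (c', Q)" by fastforce
  have "\<forall>x \<in> insert c (set ws). c' \<le> x" using Cons e by simp
  then show ?case using e by (auto simp: min_def)
qed

lemma bub_distinct: "distinct ws \<Longrightarrow> c \<notin> set ws \<Longrightarrow>
   distinct (snd (bub ws c)) \<and> fst (bub ws c) \<notin> set (snd (bub ws c))"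
proof (induction ws)
  case Nil then show ?case by simp
next
  case (Cons w ws)
  obtain c' Q where e: "bub ws c = (c', Q)" by fastforce
  have IH: "distinct Q" "c' \<notin> set Q" using Cons e by auto
  have s: "insert c' (set Q) = insert c (set ws)" using bub_set[of ws c] e by simp
  have "w \<notin> insert c (set ws)" using Cons by auto
  hence "w \<noteq> c'" "w \<notin> set Q" using s by auto
  then show ?case using IH e by (auto simp: min_def max_def)
qed

lemma bub_small: "\<forall>q \<in> set ys. c < q \<Longrightarrow> bub ys c = (c, ys)"
  by (induction ys) auto

lemma run_len: "length (fst (run Q s B zs)) = length zs + 1 \<and> length (fst (snd (run Q s B zs))) = length Q"
proof (induction zs arbitrary: Q s B)
  case Nil then show ?case using bub_len[of Q s] by (auto split: prod.splits)
next
  case (Cons z zs)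
  obtain oo Q' where e1: "bub Q s = (oo, Q')" by fastforce
  obtain os Qf Bf where e2: "run Q' (min B z) (max B z) zs = (os, Qf, Bf)" by (metis prod_cases3)
  show ?case using Cons.IH[of Q' "min B z" "max B z"] e1 e2 bub_len[of Q s] by simp
qed


fun rm :: "nat \<Rightarrow> nat list \<Rightarrow> bool" where
  "rm e [] = False"
| "rm e (w # ws) = (if w = e then (\<forall>x\<in>set ws. e < x) else rm e ws)"

lemma rm_app: "rm e Q \<Longrightarrow> e < B \<Longrightarrow> rm e (Q @ [B])"
  by (induction Q) auto

lemma rm_last: "e \<notin> set Q \<Longrightarrow> rm e (Q @ [e])"
  by (induction Q) auto

lemma rm_set: "rm e Q \<Longrightarrow> e \<in> set Q"
  by (induction Q) (auto split: if_splits)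

lemma rm_rtl: "rm e xs \<Longrightarrow> rtl_min xs e"
proof (induction xs)
  case Nil then show ?case by simp
next
  case (Cons w ws)
  show ?case
  proof (cases "w = e")
    case True
    have "\<forall>k<Suc (length ws). e \<le> (e # ws) ! k"
    proof (intro allI impI)
      fix k assume "k < Suc (length ws)"
      then show "e \<le> (e # ws) ! k" using Cons.prems True
        by (cases k) (auto simp: less_imp_le)
    qed
    then show ?thesis using True unfolding rtl_min_def
      by (intro exI[of _ 0]) auto
  next
    case False
    then have "rtl_min ws e" using Cons by auto
    then obtain j where "j < length ws" "ws ! j = e" "\<forall>k. j \<le> k \<and> k < length ws \<longrightarrow> e \<le> ws ! k"
      unfolding rtl_min_def by blast
    then have "\<forall>k. Suc j \<le> k \<and> k < length (w # ws) \<longrightarrow> e \<le> (w # ws) ! k"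
    proof (intro allI impI)
      fix k assume a: "\<forall>k. j \<le> k \<and> k < length ws \<longrightarrow> e \<le> ws ! k" and b: "Suc j \<le> k \<and> k < length (w # ws)"
      then obtain k' where "k = Suc k'" by (cases k) auto
      then show "e \<le> (w # ws) ! k" using a b by auto
    qed
    then show ?thesis unfolding rtl_min_def using \<open>j < length ws\<close> \<open>ws ! j = e\<close>
      by (intro exI[of _ "Suc j"]) auto
  qed
qed

lemma bub_key: "distinct ws \<Longrightarrow> c \<notin> set ws \<Longrightarrow> e = c \<or> rm e ws \<Longrightarrow>
   (fst (bub ws c) = e \<and> (\<forall>x\<in>set (snd (bub ws c)). e < x)) \<or>
   (fst (bub ws c) < e \<and> rm e (snd (bub ws c)))"
proof (induction ws)
  case Nil then show ?case by simp
next
  case (Cons w ws)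
  obtain c' Q where e: "bub ws c = (c', Q)" by fastforce
  have s: "insert c' (set Q) = insert c (set ws)" using bub_set[of ws c] e by simp
  have dQ: "distinct Q" "c' \<notin> set Q" using bub_distinct[of ws c] Cons.prems e by auto
  have mn: "\<forall>x \<in> insert c (set ws). c' \<le> x" using bub_min[of c ws] e by simp
  show ?case
  proof (cases "w = e")
    case True
    have ce: "c \<noteq> e" using Cons.prems True by auto
    have ws: "\<forall>x\<in>set ws. e < x" using Cons.prems True ce by auto
    show ?thesis
    proof (cases "c' < e")
      case True
      have "c' \<in> insert c (set ws)" using s by auto
      hence "c' = c" using ws True by auto
      hence "\<forall>x\<in>set Q. e < x" using s ws dQ by auto
      then show ?thesis using True e \<open>w = e\<close> by (auto simp: min_def max_def)
    next
      case False
      hence "e < c'" using ce s ws by (metis insert_iff linorder_neqE_nat order_less_imp_not_less)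
      hence "\<forall>x\<in>set Q. e < x" using s mn dQ by (metis insert_iff order_less_le_trans)
      then show ?thesis using False e \<open>w = e\<close> \<open>e < c'\<close> by (auto simp: min_def max_def)
    qed
  next
    case False
    have pre: "e = c \<or> rm e ws" using Cons.prems False by auto
    have IH: "(c' = e \<and> (\<forall>x\<in>set Q. e < x)) \<or> (c' < e \<and> rm e Q)"
      using Cons.IH[OF _ _ pre] Cons.prems e by auto
    then show ?thesis
    proof
      assume a: "c' = e \<and> (\<forall>x\<in>set Q. e < x)"
      show ?thesis
      proof (cases "w < e")
        case True then show ?thesis using a e by (auto simp: min_def max_def)
      next
        case False then show ?thesis using a e \<open>w \<noteq> e\<close> by (auto simp: min_def max_def)
      qed
    next
      assume a: "c' < e \<and> rm e Q"
      then show ?thesis using e \<open>w \<noteq> e\<close> by (auto simp: min_def max_def)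
    qed
  qed
qed

definition good :: "nat \<Rightarrow> nat list \<Rightarrow> nat list \<Rightarrow> bool" where
  "good e os RR \<longleftrightarrow> (\<exists>j<length os. os!j = e \<and> (\<forall>i<j. os!i < e)) \<or> rm e RR"

lemma good_cons: "oo < e \<Longrightarrow> good e os RR \<Longrightarrow> good e (oo # os) RR"
  unfolding good_def
  apply (elim disjE exE)
   apply (rule disjI1, rule_tac x="Suc j" in exI)
   apply (auto simp: less_Suc_eq_0_disj)
  done

lemma good_hd: "good e (e # os) RR"
  unfolding good_def by force

lemma G1: "distinct (Q @ [s, B] @ zs) \<Longrightarrow> e < B \<Longrightarrow> e = s \<or> rm e Q \<Longrightarrow>
   run Q s B zs = (os, Qf, Bf) \<Longrightarrow> good e os (Qf @ [Bf])"
proof (induction zs arbitrary: Q s B os Qf Bf)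
  case Nil
  obtain oo Q' where e1: "bub Q s = (oo, Q')" by fastforce
  have k: "(oo = e \<and> (\<forall>x\<in>set Q'. e < x)) \<or> (oo < e \<and> rm e Q')"
    using bub_key[of Q s e] Nil.prems e1 by auto
  have r: "os = [oo]" "Qf = Q'" "Bf = B" using Nil.prems e1 by auto
  show ?case using k r good_hd rm_app[of e Q' B] Nil.prems(2) unfolding good_def by auto
next
  case (Cons z zs)
  obtain oo Q' where e1: "bub Q s = (oo, Q')" by fastforce
  obtain os' Qf' Bf' where e2: "run Q' (min B z) (max B z) zs = (os', Qf', Bf')" by (metis prod_cases3)
  have k: "(oo = e \<and> (\<forall>x\<in>set Q'. e < x)) \<or> (oo < e \<and> rm e Q')"
    using bub_key[of Q s e] Cons.prems e1 by auto
  have r: "os = oo # os'" "Qf = Qf'" "Bf = Bf'" using Cons.prems e1 e2 by auto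
  show ?case
  proof (cases "oo = e")
    case True then show ?thesis using r good_hd by simp
  next
    case False
    hence k2: "oo < e" "rm e Q'" using k by auto
    have sQ: "insert oo (set Q') = insert s (set Q)" using bub_set[of Q s] e1 by simp
    have dQ: "distinct Q'" "oo \<notin> set Q'" using bub_distinct[of Q s] Cons.prems e1 by auto
    have d: "distinct (Q' @ [min B z, max B z] @ zs)"
      using Cons.prems(1) sQ dQ by (auto simp: min_def max_def)
    have "good e os' (Qf' @ [Bf'])"
      using Cons.IH[OF d _ _ e2] Cons.prems(2) k2 by auto
    then show ?thesis using r good_cons k2 by simp
  qed
qed

lemma G2: "distinct (Q @ [s, B] @ zs) \<Longrightarrow> s < B \<Longrightarrow>
   run Q s B zs = (os, Qf, Bf) \<Longrightarrow> good B os (Qf @ [Bf])"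
proof (induction zs arbitrary: Q s B os Qf Bf)
  case Nil
  obtain oo Q' where e1: "bub Q s = (oo, Q')" by fastforce
  have r: "os = [oo]" "Qf = Q'" "Bf = B" using Nil.prems e1 by auto
  have sQ: "insert oo (set Q') = insert s (set Q)" using bub_set[of Q s] e1 by simp
  have "B \<notin> set Q'" using sQ Nil.prems(1) by auto
  then show ?case using r rm_last[of B Q'] unfolding good_def by auto
next
  case (Cons z zs)
  obtain oo Q' where e1: "bub Q s = (oo, Q')" by fastforce
  obtain os' Qf' Bf' where e2: "run Q' (min B z) (max B z) zs = (os', Qf', Bf')" by (metis prod_cases3)
  have r: "os = oo # os'" "Qf = Qf'" "Bf = Bf'" using Cons.prems e1 e2 by auto
  have sQ: "insert oo (set Q') = insert s (set Q)" using bub_set[of Q s] e1 by simp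
  have dQ: "distinct Q'" "oo \<notin> set Q'" using bub_distinct[of Q s] Cons.prems e1 by auto
  have d: "distinct (Q' @ [min B z, max B z] @ zs)"
    using Cons.prems(1) sQ dQ by (auto simp: min_def max_def)
  have "oo \<le> s" using bub_min[of s Q] e1 by auto
  hence ob: "oo < B" using Cons.prems(2) by simp
  have Bz: "B \<noteq> z" using Cons.prems(1) by auto
  show ?case
  proof (cases "z < B")
    case True
    hence "good B os' (Qf' @ [Bf'])" using Cons.IH[OF d _ e2] by (simp add: min_def max_def)
    then show ?thesis using r good_cons ob by simp
  next
    case False
    hence "B < z" using Bz by simp
    hence "good B os' (Qf' @ [Bf'])" using G1[OF d _ _ e2] by (simp add: min_def max_def)
    then show ?thesis using r good_cons ob by simp
  qed
qed

lemma P1_pass: assumes "distinct (Q @ [s, B])" "set (Q @ [s, B]) \<subseteq> {1..n}" "s < B" "bub Q s = (oo, Q')"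
  shows "oo + (length Q + 1) \<le> n"
proof -
  have mn: "\<forall>x \<in> insert s (set Q). oo \<le> x" using bub_min[of s Q] assms(4) by simp
  have oin: "oo \<in> insert s (set Q)" using bub_set[of Q s] assms(4) by auto
  let ?S = "insert B (insert s (set Q) - {oo})"
  have "?S \<subseteq> {oo<..n}"
  proof
    fix x assume x: "x \<in> ?S"
    have "x \<le> n" using x assms(2) by auto
    moreover have "oo < x"
    proof (cases "x = B")
      case True then show ?thesis using mn assms(3) by force
    next
      case False then have "x \<in> insert s (set Q)" "x \<noteq> oo" using x by auto
      then show ?thesis using mn by force
    qed
    ultimately show "x \<in> {oo<..n}" by simp
  qed
  hence "card ?S \<le> card {oo<..n}" by (intro card_mono) auto
  hence "card ?S \<le> n - oo" by simp
  moreover have "B \<notin> insert s (set Q) - {oo}" using assms(1) by auto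
  hence "card ?S = card (insert s (set Q) - {oo}) + 1" by simp
  moreover have "card (insert s (set Q)) = length Q + 1" using assms(1) by (simp add: distinct_card)
  hence "card (insert s (set Q) - {oo}) = length Q" using oin by simp
  ultimately show ?thesis by simp
qed

lemma P1: "distinct (Q @ [s, B] @ zs) \<Longrightarrow> set (Q @ [s, B] @ zs) \<subseteq> {1..n} \<Longrightarrow> s < B \<Longrightarrow>
   run Q s B zs = (os, Qf, Bf) \<Longrightarrow> \<forall>x\<in>set os. x + (length Q + 1) \<le> n"
proof (induction zs arbitrary: Q s B os Qf Bf)
  case Nil
  obtain oo Q' where e1: "bub Q s = (oo, Q')" by fastforce
  have r: "os = [oo]" using Nil.prems e1 by auto
  have "oo + (length Q + 1) \<le> n" by (rule P1_pass[OF _ _ _ e1]) (use Nil.prems in auto)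
  then show ?case using r by simp
next
  case (Cons z zs)
  obtain oo Q' where e1: "bub Q s = (oo, Q')" by fastforce
  obtain os' Qf' Bf' where e2: "run Q' (min B z) (max B z) zs = (os', Qf', Bf')" by (metis prod_cases3)
  have r: "os = oo # os'" using Cons.prems e1 e2 by auto
  have sQ: "insert oo (set Q') = insert s (set Q)" using bub_set[of Q s] e1 by simp
  have dQ: "distinct Q'" "oo \<notin> set Q'" using bub_distinct[of Q s] Cons.prems e1 by auto
  have d: "distinct (Q' @ [min B z, max B z] @ zs)"
    using Cons.prems(1) sQ dQ by (auto simp: min_def max_def)
  have sub: "set (Q' @ [min B z, max B z] @ zs) \<subseteq> {1..n}"
    using Cons.prems(2) sQ by (auto simp: min_def max_def)
  have lt: "min B z < max B z" using Cons.prems(1) by (auto simp: min_def max_def)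
  have lQ: "length Q' = length Q" using bub_len[of Q s] e1 by simp
  have "oo + (length Q + 1) \<le> n" by (rule P1_pass[OF _ _ _ e1]) (use Cons.prems in auto)
  then show ?case using r Cons.IH[OF d sub lt e2] lQ by simp
qed

lemma T_run: "\<forall>x \<in> insert s (set zs). \<forall>q\<in>set Q. x < q \<Longrightarrow> \<forall>z\<in>set zs. z < B \<Longrightarrow>
  run Q s B zs = (s # zs, Q, B)"
proof (induction zs arbitrary: s)
  case Nil then show ?case using bub_small[of Q s] by auto
next
  case (Cons z zs)
  have "run Q z B zs = (z # zs, Q, B)" using Cons by auto
  then show ?case using bub_small[of Q s] Cons.prems by (auto simp: min_def max_def)
qed

lemma T_prefix: "\<forall>x \<in> insert s (set us). \<forall>q\<in>set Q. x < q \<Longrightarrow> \<forall>u\<in>set us. u < B \<Longrightarrow>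
  run Q (min B z) (max B z) vs = (os, Qf, Bf) \<Longrightarrow> run Q s B (us @ z # vs) = (s # us @ os, Qf, Bf)"
proof (induction us arbitrary: s)
  case Nil then show ?case using bub_small[of Q s] by auto
next
  case (Cons u us)
  have "run Q u B (us @ z # vs) = (u # us @ os, Qf, Bf)" using Cons by auto
  then show ?case using bub_small[of Q s] Cons.prems by (auto simp: min_def max_def)
qed

lemma bub_replace: "i < length ys \<Longrightarrow> \<forall>q. i < q \<and> q < length ys \<longrightarrow> ys!i < ys!q \<Longrightarrow>
  \<forall>q\<in>set ys. x < q \<Longrightarrow> bub (ys[i := x]) (ys!i) = (x, ys)"
proof (induction ys arbitrary: i)
  case Nil then show ?case by simp
next
  case (Cons w ws)
  show ?case
  proof (cases i)
    case 0
    have "\<forall>q\<in>set ws. w < q"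
    proof
      fix q assume "q \<in> set ws"
      then obtain k where "k < length ws" "ws ! k = q" by (auto simp: in_set_conv_nth)
      then show "w < q" using Cons.prems(2)[rule_format, of "Suc k"] 0 by auto
    qed
    then have "bub ws w = (w, ws)" by (rule bub_small)
    then show ?thesis using 0 Cons.prems by (auto simp: min_def max_def)
  next
    case (Suc i')
    have h: "\<forall>q. i' < q \<and> q < length ws \<longrightarrow> ws!i' < ws!q"
    proof (intro allI impI)
      fix q assume "i' < q \<and> q < length ws"
      then show "ws!i' < ws!q" using Cons.prems(2)[rule_format, of "Suc q"] Suc by auto
    qed
    have "bub (ws[i' := x]) (ws!i') = (x, ws)"
      using Cons.IH[of i'] h Cons.prems Suc by auto
    then show ?thesis using Suc Cons.prems by (auto simp: min_def max_def)
  qed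
qed



definition lconf :: "nat set list \<Rightarrow> config" where
  "lconf L = (\<lambda>i. if 0 \<le> i \<and> i < int (length L) then L ! nat i else {})"

lemma lconf_append: "lconf (A @ B) i = (if i < int (length A) then lconf A i else lconf B (i - int (length A)))"
  unfolding lconf_def by (auto simp: nth_append nat_diff_distrib)

lemma lconf_Cons: "lconf (x # B) i = (if i = 0 then x else lconf B (i - 1))"
  unfolding lconf_def by (auto simp: nth_Cons' nat_diff_distrib)

lemma fire_lconf:
  assumes "x < y"
  shows "topple_step (lconf (pre @ [A, {x,y}, D] @ post)) (lconf (pre @ [insert x A, {}, insert y D] @ post))"
proof -
  let ?i = "int (length pre) + 1"
  let ?C = "lconf (pre @ [A, {x,y}, D] @ post)"
  have c: "?C ?i = {x,y}" "?C (?i - 1) = A" "?C (?i + 1) = D"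
    by (simp_all add: lconf_append lconf_Cons)
  have "lconf (pre @ [insert x A, {}, insert y D] @ post) =
        ?C(?i := ?C ?i - {x, y}, ?i - 1 := insert x (?C (?i - 1)), ?i + 1 := insert y (?C (?i + 1)))"
    unfolding c by (rule ext) (simp add: lconf_append lconf_Cons)
  then show ?thesis unfolding topple_step_def using assms c by blast
qed

lemma wave:
  "distinct ws \<Longrightarrow> s \<notin> set ws \<Longrightarrow> s < B \<Longrightarrow> bub ws s = (oo, Q') \<Longrightarrow>
   topple_step\<^sup>*\<^sup>* (lconf (pre @ [H] @ map (\<lambda>x. {x}) ws @ [{s,B}] @ [Y] @ post))
                 (lconf (pre @ [insert oo H] @ [{}] @ map (\<lambda>x. {x}) Q' @ [insert B Y] @ post))"
proof (induction ws arbitrary: pre H oo Q')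
  case Nil
  then show ?case using fire_lconf[of s B pre H Y post] by auto
next
  case (Cons w ws)
  obtain c' Q where e: "bub ws s = (c', Q)" by fastforce
  have st1: "topple_step\<^sup>*\<^sup>* (lconf ((pre @ [H]) @ [{w}] @ map (\<lambda>x. {x}) ws @ [{s,B}] @ [Y] @ post))
                 (lconf ((pre @ [H]) @ [insert c' {w}] @ [{}] @ map (\<lambda>x. {x}) Q @ [insert B Y] @ post))"
    using Cons.IH[where pre="pre @ [H]" and H="{w}" and oo=c' and Q'=Q] Cons.prems e by auto
  have "c' \<in> insert s (set ws)" using bub_set[of ws s] e by auto
  hence ne: "w \<noteq> c'" using Cons.prems by auto
  have ins: "insert c' {w} = {min w c', max w c'}" by (auto simp: min_def max_def)
  have st2: "topple_step (lconf (pre @ [H, {min w c', max w c'}, {}] @ (map (\<lambda>x. {x}) Q @ [insert B Y] @ post)))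
      (lconf (pre @ [insert (min w c') H, {}, insert (max w c') {}] @ (map (\<lambda>x. {x}) Q @ [insert B Y] @ post)))"
    by (rule fire_lconf) (use ne in \<open>auto simp: min_def max_def\<close>)
  have r: "oo = min w c'" "Q' = max w c' # Q" using Cons.prems e by auto
  have "topple_step\<^sup>*\<^sup>* (lconf ((pre @ [H]) @ [{w}] @ map (\<lambda>x. {x}) ws @ [{s,B}] @ [Y] @ post))
    (lconf (pre @ [insert (min w c') H, {}, insert (max w c') {}] @ (map (\<lambda>x. {x}) Q @ [insert B Y] @ post)))"
  proof -
    have st1': "topple_step\<^sup>*\<^sup>* (lconf ((pre @ [H]) @ [{w}] @ map (\<lambda>x. {x}) ws @ [{s,B}] @ [Y] @ post))
      (lconf (pre @ [H, {min w c', max w c'}, {}] @ (map (\<lambda>x. {x}) Q @ [insert B Y] @ post)))"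
      using st1 unfolding ins by simp
    have "topple_step\<^sup>*\<^sup>* (lconf ((pre @ [H]) @ [{w}] @ map (\<lambda>x. {x}) ws @ [{s,B}] @ [Y] @ post))
      (lconf (pre @ [insert (min w c') H, {}, insert (max w c') {}] @ (map (\<lambda>x. {x}) Q @ [insert B Y] @ post)))"
      apply (rule rtranclp.rtrancl_into_rtrancl)
       apply (rule st1')
      apply (rule st2)
      done
    then show ?thesis by simp
  qed
  then show ?case unfolding r by simp
qed

lemma run_real:
  "distinct (Q @ [s, B] @ zs) \<Longrightarrow> s < B \<Longrightarrow> run Q s B zs = (os, Qf, Bf) \<Longrightarrow>
   topple_step\<^sup>*\<^sup>* (lconf (map (\<lambda>x. {x}) outs @ [{}] @ map (\<lambda>x. {x}) Q @ [{s,B}] @ map (\<lambda>x. {x}) zs @ [{}]))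
                 (lconf (map (\<lambda>x. {x}) (outs @ os) @ [{}] @ map (\<lambda>x. {x}) Qf @ [{Bf}]))"
proof (induction zs arbitrary: outs Q s B os Qf Bf)
  case Nil
  obtain oo Q' where e1: "bub Q s = (oo, Q')" by fastforce
  have r: "os = [oo]" "Qf = Q'" "Bf = B" using Nil.prems e1 by auto
  have d: "distinct Q" "s \<notin> set Q" "s < B" using Nil.prems by auto
  have "topple_step\<^sup>*\<^sup>* (lconf (map (\<lambda>x. {x}) outs @ [{}] @ map (\<lambda>x. {x}) Q @ [{s,B}] @ [{}] @ []))
      (lconf (map (\<lambda>x. {x}) outs @ [insert oo {}] @ [{}] @ map (\<lambda>x. {x}) Q' @ [insert B {}] @ []))"
    by (rule wave[OF d e1])
  then show ?case unfolding r by simp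
next
  case (Cons z zs)
  obtain oo Q' where e1: "bub Q s = (oo, Q')" by fastforce
  obtain os' Qf' Bf' where e2: "run Q' (min B z) (max B z) zs = (os', Qf', Bf')" by (metis prod_cases3)
  have r: "os = oo # os'" "Qf = Qf'" "Bf = Bf'" using Cons.prems e1 e2 by auto
  have sQ: "insert oo (set Q') = insert s (set Q)" using bub_set[of Q s] e1 by simp
  have dQ: "distinct Q'" "oo \<notin> set Q'" using bub_distinct[of Q s] Cons.prems e1 by auto
  have d: "distinct (Q' @ [min B z, max B z] @ zs)"
    using Cons.prems(1) sQ dQ by (auto simp: min_def max_def)
  have lt: "min B z < max B z" using Cons.prems(1) by (auto simp: min_def max_def)
  have w: "topple_step\<^sup>*\<^sup>* (lconf (map (\<lambda>x. {x}) outs @ [{}] @ map (\<lambda>x. {x}) Q @ [{s,B}] @ [{z}] @ (map (\<lambda>x. {x}) zs @ [{}])))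
      (lconf (map (\<lambda>x. {x}) outs @ [insert oo {}] @ [{}] @ map (\<lambda>x. {x}) Q' @ [insert B {z}] @ (map (\<lambda>x. {x}) zs @ [{}])))"
  proof -
    have d: "distinct Q" "s \<notin> set Q" "s < B" using Cons.prems by auto
    show ?thesis by (rule wave[OF d e1])
  qed
  have ins: "insert B {z} = {min B z, max B z}" by (auto simp: min_def max_def)
  have IH: "topple_step\<^sup>*\<^sup>* (lconf (map (\<lambda>x. {x}) (outs @ [oo]) @ [{}] @ map (\<lambda>x. {x}) Q' @ [{min B z, max B z}] @ map (\<lambda>x. {x}) zs @ [{}]))
       (lconf (map (\<lambda>x. {x}) ((outs @ [oo]) @ os') @ [{}] @ map (\<lambda>x. {x}) Qf' @ [{Bf'}]))"
    using Cons.IH[OF d lt e2] .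
  have b: "map (\<lambda>x. {x}) outs @ [insert oo {}] @ [{}] @ map (\<lambda>x. {x}) Q' @ [insert B {z}] @ (map (\<lambda>x. {x}) zs @ [{}])
     = map (\<lambda>x. {x}) (outs @ [oo]) @ [{}] @ map (\<lambda>x. {x}) Q' @ [{min B z, max B z}] @ map (\<lambda>x. {x}) zs @ [{}]"
    using ins by simp
  have "topple_step\<^sup>*\<^sup>* (lconf (map (\<lambda>x. {x}) outs @ [{}] @ map (\<lambda>x. {x}) Q @ [{s,B}] @ [{z}] @ (map (\<lambda>x. {x}) zs @ [{}])))
       (lconf (map (\<lambda>x. {x}) ((outs @ [oo]) @ os') @ [{}] @ map (\<lambda>x. {x}) Qf' @ [{Bf'}]))"
    by (rule rtranclp_trans[OF w[unfolded b] IH])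
  then show ?case unfolding r by simp
qed



definition Pattern :: "nat \<Rightarrow> (int \<Rightarrow> nat) \<Rightarrow> bool" where
  "Pattern m c \<longleftrightarrow> (\<forall>i. (i < 0 \<or> i > int m + 1) \<longrightarrow> c i = 0) \<and> (\<forall>i. c i \<le> 2) \<and>
     (\<forall>i. c i = 2 \<longrightarrow> (\<exists>j. 0 \<le> j \<and> j < i \<and> c j = 0)) \<and>
     (\<forall>i. c i = 2 \<longrightarrow> (\<exists>k. i < k \<and> k \<le> int m + 1 \<and> c k = 0)) \<and>
     (\<forall>h l. h < l \<longrightarrow> c h = 2 \<longrightarrow> c l = 2 \<longrightarrow> (\<exists>k. h < k \<and> k < l \<and> c k = 0))"

lemma pattern_facts:
  assumes P: "Pattern m c" and ci: "c i = 2"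
  shows "1 \<le> i" "i \<le> int m" "c (i - 1) \<le> 1" "c (i + 1) \<le> 1"
proof -
  obtain j where "0 \<le> j" "j < i" using P ci unfolding Pattern_def by blast
  then show "1 \<le> i" by simp
  obtain k where "i < k" "k \<le> int m + 1" using P ci unfolding Pattern_def by blast
  then show "i \<le> int m" by simp
  have "c (i - 1) \<noteq> 2"
  proof
    assume "c (i - 1) = 2"
    have P5: "\<forall>h l. h < l \<longrightarrow> c h = 2 \<longrightarrow> c l = 2 \<longrightarrow> (\<exists>k. h < k \<and> k < l \<and> c k = 0)"
      using P unfolding Pattern_def by blast
    have lt: "i - 1 < i" by simp
    obtain k where "i - 1 < k" "k < i" using P5[rule_format, OF lt \<open>c (i - 1) = 2\<close> ci] by blast
    then show False by simp
  qed
  then show "c (i - 1) \<le> 1" using P unfolding Pattern_def by (metis le_antisym not_less_eq_eq one_add_one plus_1_eq_Suc)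
  have "c (i + 1) \<noteq> 2"
  proof
    assume "c (i + 1) = 2"
    have P5: "\<forall>h l. h < l \<longrightarrow> c h = 2 \<longrightarrow> c l = 2 \<longrightarrow> (\<exists>k. h < k \<and> k < l \<and> c k = 0)"
      using P unfolding Pattern_def by blast
    then obtain k where "i < k" "k < i + 1" using P5[rule_format, of i "i + 1"] ci \<open>c (i + 1) = 2\<close> by auto
    then show False by simp
  qed
  then show "c (i + 1) \<le> 1" using P unfolding Pattern_def by (metis le_antisym not_less_eq_eq one_add_one plus_1_eq_Suc)
qed

lemma pattern_step:
  assumes P: "Pattern m c" and ci: "c i = 2"
  defines "c' \<equiv> c(i := 0, i - 1 := Suc (c (i - 1)), i + 1 := Suc (c (i + 1)))"
  shows "Pattern m c'"
proof -
  note F = pattern_facts[OF P ci]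
  have P1: "\<forall>i. (i < 0 \<or> i > int m + 1) \<longrightarrow> c i = 0" and P2: "\<forall>i. c i \<le> 2"
   and P3: "\<forall>i. c i = 2 \<longrightarrow> (\<exists>j. 0 \<le> j \<and> j < i \<and> c j = 0)"
   and P4: "\<forall>i. c i = 2 \<longrightarrow> (\<exists>k. i < k \<and> k \<le> int m + 1 \<and> c k = 0)"
   and P5: "\<forall>h l. h < l \<longrightarrow> c h = 2 \<longrightarrow> c l = 2 \<longrightarrow> (\<exists>k. h < k \<and> k < l \<and> c k = 0)"
    using P unfolding Pattern_def by blast+
  have cv: "c' x = (if x = i - 1 then Suc (c (i - 1)) else if x = i + 1 then Suc (c (i + 1)) else if x = i then 0 else c x)" for x
    unfolding c'_def by auto
  have Q1: "\<forall>x. (x < 0 \<or> x > int m + 1) \<longrightarrow> c' x = 0"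
    using P1 F by (auto simp: cv)
  have Q2: "\<forall>x. c' x \<le> 2"
    using P2 F by (auto simp: cv)
  obtain j0 where j0: "0 \<le> j0" "j0 < i" "c j0 = 0" using P3 ci by blast
  obtain k0 where k0: "i < k0" "k0 \<le> int m + 1" "c k0 = 0" using P4 ci by blast
  have Q34: "(\<exists>j. 0 \<le> j \<and> j < x \<and> c' j = 0) \<and> (\<exists>k. x < k \<and> k \<le> int m + 1 \<and> c' k = 0)" if x2: "c' x = 2" for x
  proof -
    consider "x = i - 1" | "x = i + 1" | "x = i" | "x < i - 1" | "x > i + 1" by linarith
    then show ?thesis
    proof cases
      case 1
      hence "c (i - 1) = 1" using x2 by (simp add: cv)
      hence "j0 \<noteq> i - 1" using j0 by auto
      hence "j0 < i - 1" using j0 by simp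
      hence "c' j0 = 0" using j0 by (simp add: cv)
      moreover have "c' i = 0" by (simp add: cv)
      ultimately show ?thesis using 1 \<open>j0 < i - 1\<close> j0 F by (intro conjI exI[of _ j0] exI[of _ i]) auto
    next
      case 2
      hence "c (i + 1) = 1" using x2 by (simp add: cv)
      hence "k0 \<noteq> i + 1" using k0 by auto
      hence "k0 > i + 1" using k0 by simp
      hence "c' k0 = 0" using k0 by (simp add: cv)
      moreover have "c' i = 0" by (simp add: cv)
      ultimately show ?thesis using 2 \<open>k0 > i + 1\<close> k0 F by (intro conjI exI[of _ k0] exI[of _ i]) auto
    next
      case 3 then show ?thesis using x2 by (simp add: cv)
    next
      case 4
      hence cx: "c x = 2" using x2 by (simp add: cv)
      obtain j where j: "0 \<le> j" "j < x" "c j = 0" using P3 cx by blast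
      have "c' j = 0" using j 4 by (simp add: cv)
      moreover have "c' i = 0" by (simp add: cv)
      ultimately show ?thesis using 4 j F by (intro conjI exI[of _ j] exI[of _ i]) auto
    next
      case 5
      hence cx: "c x = 2" using x2 by (simp add: cv)
      obtain k where k: "x < k" "k \<le> int m + 1" "c k = 0" using P4 cx by blast
      have "c' k = 0" using k 5 by (simp add: cv)
      moreover have "c' i = 0" by (simp add: cv)
      ultimately show ?thesis using 5 k F by (intro conjI exI[of _ i] exI[of _ k]) auto
    qed
  qed
  have Q5: "\<exists>k. h < k \<and> k < l \<and> c' k = 0" if hl: "h < l" "c' h = 2" "c' l = 2" for h l
  proof -
    have hi: "h \<noteq> i" "l \<noteq> i" using hl by (auto simp: cv)
    consider "h < i \<and> i < l" | "l < i" | "h > i" using hi hl by linarith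
    then show ?thesis
    proof cases
      case 1 then show ?thesis by (intro exI[of _ i]) (simp add: cv)
    next
      case 2
      hence "h < i - 1" using hl by simp
      hence ch: "c h = 2" using hl 2 by (simp add: cv)
      show ?thesis
      proof (cases "l = i - 1")
        case True
        hence "c (i - 1) = 1" using hl by (simp add: cv)
        obtain k where k: "h < k" "k < i" "c k = 0" using P5[rule_format, of h i] ch ci \<open>h < i - 1\<close> by auto
        have "k \<noteq> i - 1" using k \<open>c (i - 1) = 1\<close> by auto
        then show ?thesis using k True by (intro exI[of _ k]) (simp add: cv)
      next
        case False
        hence "l < i - 1" using 2 by simp
        hence cl: "c l = 2" using hl by (simp add: cv)
        obtain k where k: "h < k" "k < l" "c k = 0" using P5 ch cl hl by blast
        then show ?thesis using \<open>l < i - 1\<close> by (intro exI[of _ k]) (simp add: cv)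
      qed
    next
      case 3
      hence "l > i + 1" using hl by simp
      hence cl: "c l = 2" using hl 3 by (simp add: cv)
      show ?thesis
      proof (cases "h = i + 1")
        case True
        hence "c (i + 1) = 1" using hl by (simp add: cv)
        obtain k where k: "i < k" "k < l" "c k = 0" using P5[rule_format, of i l] cl ci \<open>l > i + 1\<close> by auto
        have "k \<noteq> i + 1" using k \<open>c (i + 1) = 1\<close> by auto
        then show ?thesis using k True by (intro exI[of _ k]) (simp add: cv)
      next
        case False
        hence "h > i + 1" using 3 by simp
        hence ch: "c h = 2" using hl by (simp add: cv)
        obtain k where k: "h < k" "k < l" "c k = 0" using P5 ch cl hl by blast
        then show ?thesis using \<open>h > i + 1\<close> by (intro exI[of _ k]) (simp add: cv)
      qed
    qed
  qed
  show ?thesis unfolding Pattern_def using Q1 Q2 Q34 Q5 by blast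
qed


definition fire :: "config \<Rightarrow> int \<Rightarrow> nat \<Rightarrow> nat \<Rightarrow> config" where
  "fire C i a b = C(i := C i - {a, b}, i - 1 := insert a (C (i - 1)), i + 1 := insert b (C (i + 1)))"

lemma topple_step_fire: "topple_step C D \<longleftrightarrow> (\<exists>i a b. a \<in> C i \<and> b \<in> C i \<and> a < b \<and> D = fire C i a b)"
  unfolding topple_step_def fire_def by simp

definition Inv :: "nat \<Rightarrow> config \<Rightarrow> bool" where
  "Inv m C \<longleftrightarrow> (\<forall>i. finite (C i)) \<and> (\<forall>x i j. x \<in> C i \<longrightarrow> x \<in> C j \<longrightarrow> i = j) \<and>
     Pattern m (\<lambda>i. card (C i))"

lemma inv_pair: assumes "Inv m C" "a \<in> C i" "b \<in> C i" "a < b"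
  shows "C i = {a, b}" "card (C i) = 2"
proof -
  have f: "finite (C i)" using assms(1) unfolding Inv_def by blast
  have le: "card (C i) \<le> 2" using assms(1) unfolding Inv_def Pattern_def by blast
  have sub: "{a, b} \<subseteq> C i" using assms by auto
  have c2: "card {a, b} = 2" using assms(4) by simp
  have "card {a, b} \<le> card (C i)" using card_mono[OF f sub] .
  hence "card (C i) = 2" using le c2 by simp
  then show "card (C i) = 2" .
  show "C i = {a, b}" using card_subset_eq[OF f sub] c2 \<open>card (C i) = 2\<close> by simp
qed

lemma fire_mem: "x \<in> fire C i a b k \<longleftrightarrow>
   (if k = i - 1 then x = a \<or> x \<in> C (i - 1) else if k = i + 1 then x = b \<or> x \<in> C (i + 1)
    else if k = i then x \<in> C i - {a, b} else x \<in> C k)"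
  unfolding fire_def by auto

lemma inv_fire: assumes I: "Inv m C" and ab: "a \<in> C i" "b \<in> C i" "a < b"
  shows "Inv m (fire C i a b)"
proof -
  have fin: "\<forall>i. finite (C i)" and U: "\<forall>x i j. x \<in> C i \<longrightarrow> x \<in> C j \<longrightarrow> i = j"
    and P: "Pattern m (\<lambda>i. card (C i))" using I unfolding Inv_def by blast+
  have Ci: "C i = {a, b}" "card (C i) = 2" using inv_pair[OF I ab] by auto
  have fin': "\<forall>k. finite (fire C i a b k)" using fin unfolding fire_def by auto
  have aU: "a \<in> C k \<Longrightarrow> k = i" for k using U ab by blast
  have bU: "b \<in> C k \<Longrightarrow> k = i" for k using U ab by blast
  have U': "\<forall>x k l. x \<in> fire C i a b k \<longrightarrow> x \<in> fire C i a b l \<longrightarrow> k = l"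
  proof (intro allI impI)
    fix x k l assume k: "x \<in> fire C i a b k" and l: "x \<in> fire C i a b l"
    have k': "(k = i - 1 \<and> (x = a \<or> x \<in> C (i - 1))) \<or> (k = i + 1 \<and> (x = b \<or> x \<in> C (i + 1))) \<or>
       (k \<noteq> i - 1 \<and> k \<noteq> i + 1 \<and> k \<noteq> i \<and> x \<in> C k)"
      using k Ci unfolding fire_mem by (auto split: if_splits)
    have l': "(l = i - 1 \<and> (x = a \<or> x \<in> C (i - 1))) \<or> (l = i + 1 \<and> (x = b \<or> x \<in> C (i + 1))) \<or>
       (l \<noteq> i - 1 \<and> l \<noteq> i + 1 \<and> l \<noteq> i \<and> x \<in> C l)"
      using l Ci unfolding fire_mem by (auto split: if_splits)
    have "a \<noteq> b" using ab by simp
    show "k = l"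
    proof (cases "x = a")
      case True
      have n1: "a \<notin> C (i + 1)" using aU[of "i + 1"] by auto
      have n2: "\<And>k. k \<noteq> i \<Longrightarrow> a \<notin> C k" using aU by blast
      have "k = i - 1" using k' True \<open>a \<noteq> b\<close> n1 n2 by blast
      moreover have "l = i - 1" using l' True \<open>a \<noteq> b\<close> n1 n2 by blast
      ultimately have "k = i - 1" "l = i - 1" by auto
      then show ?thesis by simp
    next
      case False
      show ?thesis
      proof (cases "x = b")
        case True
        have n1: "b \<notin> C (i - 1)" using bU[of "i - 1"] by auto
        have n2: "\<And>k. k \<noteq> i \<Longrightarrow> b \<notin> C k" using bU by blast
        have "k = i + 1" using k' True \<open>a \<noteq> b\<close> n1 n2 by blast
        moreover have "l = i + 1" using l' True \<open>a \<noteq> b\<close> n1 n2 by blast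
        ultimately have "k = i + 1" "l = i + 1" by auto
        then show ?thesis by simp
      next
        case False
        have "x \<in> C k" using k' False \<open>x \<noteq> a\<close> by blast
        moreover have "x \<in> C l" using l' False \<open>x \<noteq> a\<close> by blast
        ultimately have "x \<in> C k" "x \<in> C l" by auto
        then show ?thesis using U by blast
      qed
    qed
  qed
  have a1: "a \<notin> C (i - 1)" using aU by fastforce
  have b1: "b \<notin> C (i + 1)" using bU by fastforce
  have cardf: "(\<lambda>k. card (fire C i a b k)) = (\<lambda>k. card (C k))(i := 0, i - 1 := Suc (card (C (i - 1))), i + 1 := Suc (card (C (i + 1))))"
  proof (rule ext)
    fix k
    show "card (fire C i a b k) = ((\<lambda>k. card (C k))(i := 0, i - 1 := Suc (card (C (i - 1))), i + 1 := Suc (card (C (i + 1))))) k"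
    proof -
      consider "k = i - 1" | "k = i + 1" | "k = i" | "k \<noteq> i - 1 \<and> k \<noteq> i + 1 \<and> k \<noteq> i" by blast
      then show ?thesis
      proof cases
        case 1 then show ?thesis using fin a1 unfolding fire_def by simp
      next
        case 2 then show ?thesis using fin b1 unfolding fire_def by simp
      next
        case 3 then show ?thesis using Ci unfolding fire_def by simp
      next
        case 4 then show ?thesis unfolding fire_def by simp
      qed
    qed
  qed
  have "Pattern m (\<lambda>k. card (fire C i a b k))"
    unfolding cardf by (rule pattern_step[OF P]) (use Ci in simp)
  then show ?thesis unfolding Inv_def using fin' U' by blast
qed


lemma inv_step: "Inv m C \<Longrightarrow> topple_step C D \<Longrightarrow> Inv m D"
  unfolding topple_step_fire using inv_fire by blast

lemma fire_comm: "j \<noteq> i \<Longrightarrow> j \<noteq> i - 1 \<Longrightarrow> j \<noteq> i + 1 \<Longrightarrow>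
  fire (fire C i a b) j c d = fire (fire C j c d) i a b"
  unfolding fire_def by (rule ext) (simp add: insert_commute ac_simps)

lemma stable_no_step: "Inv m C \<Longrightarrow> stable C \<Longrightarrow> \<not> topple_step C D"
proof
  assume I: "Inv m C" and s: "stable C" and t: "topple_step C D"
  then obtain i a b where ab: "a \<in> C i" "b \<in> C i" "a < b" unfolding topple_step_fire by blast
  have "card (C i) = 2" using inv_pair[OF I ab] by simp
  moreover have "card (C i) \<le> 1" using s unfolding stable_def by blast
  ultimately show False by simp
qed

lemma diamond: assumes I: "Inv m C" and t1: "topple_step C D1" and t2: "topple_step C D2" and ne: "D1 \<noteq> D2"
  shows "\<exists>E. topple_step D1 E \<and> topple_step D2 E"
proof -
  obtain i a b where ab: "a \<in> C i" "b \<in> C i" "a < b" and D1: "D1 = fire C i a b"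
    using t1 unfolding topple_step_fire by blast
  obtain j c d where cd: "c \<in> C j" "d \<in> C j" "c < d" and D2: "D2 = fire C j c d"
    using t2 unfolding topple_step_fire by blast
  have Ci: "C i = {a, b}" "card (C i) = 2" using inv_pair[OF I ab] by auto
  have Cj: "C j = {c, d}" "card (C j) = 2" using inv_pair[OF I cd] by auto
  have "i \<noteq> j"
  proof
    assume "i = j"
    hence "{a, b} = {c, d}" using Ci Cj by simp
    hence "a = c \<and> b = d" using ab(3) cd(3) by (auto simp: doubleton_eq_iff)
    thus False using ne D1 D2 \<open>i = j\<close> by simp
  qed
  have P5: "\<forall>h l. h < l \<longrightarrow> card (C h) = 2 \<longrightarrow> card (C l) = 2 \<longrightarrow> (\<exists>k. h < k \<and> k < l \<and> card (C k) = 0)"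
    using I unfolding Inv_def Pattern_def by blast
  have far: "j \<noteq> i - 1 \<and> j \<noteq> i + 1"
  proof (cases "i < j")
    case True
    then obtain k where "i < k" "k < j" using P5 Ci Cj by blast
    then show ?thesis by auto
  next
    case False
    hence "j < i" using \<open>i \<noteq> j\<close> by simp
    then obtain k where "j < k" "k < i" using P5 Ci Cj by blast
    then show ?thesis by auto
  qed
  have "D1 j = C j" unfolding D1 fire_def using far \<open>i \<noteq> j\<close> by auto
  hence s1: "topple_step D1 (fire D1 j c d)" unfolding topple_step_fire using cd by auto
  have "D2 i = C i" unfolding D2 fire_def using far \<open>i \<noteq> j\<close> by auto
  hence s2: "topple_step D2 (fire D2 i a b)" unfolding topple_step_fire using ab by auto
  have "fire D1 j c d = fire D2 i a b" unfolding D1 D2 using fire_comm far \<open>i \<noteq> j\<close> by metis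
  then show ?thesis using s1 s2 by auto
qed

lemma det1: "(topple_step ^^ n) C D \<Longrightarrow> stable D \<Longrightarrow> Inv m C \<Longrightarrow> topple_step C C' \<Longrightarrow>
  \<exists>n'. n = Suc n' \<and> (topple_step ^^ n') C' D"
proof (induction n arbitrary: C C')
  case 0
  then have "C = D" by simp
  then show ?case using stable_no_step 0 by blast
next
  case (Suc n)
  obtain C1 where c1: "topple_step C C1" "(topple_step ^^ n) C1 D" using Suc.prems(1) by (rule relpowp_Suc_E2)
  show ?case
  proof (cases "C1 = C'")
    case True then show ?thesis using c1 by auto
  next
    case False
    obtain E where E: "topple_step C1 E" "topple_step C' E" using diamond[OF Suc.prems(3) c1(1) Suc.prems(4) False] by blast
    have I1: "Inv m C1" using inv_step Suc.prems(3) c1(1) by blast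
    obtain n'' where n'': "n = Suc n''" "(topple_step ^^ n'') E D" using Suc.IH[OF c1(2) Suc.prems(2) I1 E(1)] by blast
    have "(topple_step ^^ Suc n'') C' D" using E(2) n''(2) by (rule relpowp_Suc_I2)
    then show ?thesis using n'' by auto
  qed
qed

lemma det: "(topple_step ^^ k) C D' \<Longrightarrow> stable D' \<Longrightarrow> (topple_step ^^ n) C D \<Longrightarrow> stable D \<Longrightarrow> Inv m C \<Longrightarrow> D = D'"
proof (induction k arbitrary: C n)
  case 0
  then have "C = D'" by simp
  show ?case
  proof (cases n)
    case 0 then show ?thesis using \<open>C = D'\<close> \<open>(topple_step ^^ n) C D\<close> by simp
  next
    case (Suc n')
    then obtain C1 where "topple_step C C1" using \<open>(topple_step ^^ n) C D\<close> by (metis relpowp_Suc_E2)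
    then show ?thesis using stable_no_step \<open>C = D'\<close> 0 by blast
  qed
next
  case (Suc k)
  obtain C1 where c1: "topple_step C C1" "(topple_step ^^ k) C1 D'" using Suc.prems(1) by (rule relpowp_Suc_E2)
  obtain n' where "(topple_step ^^ n') C1 D" using det1[OF Suc.prems(3) Suc.prems(4) Suc.prems(5) c1(1)] by blast
  moreover have "Inv m C1" using inv_step Suc.prems(5) c1(1) by blast
  ultimately show ?case using Suc.IH[OF c1(2) Suc.prems(2)] Suc.prems(4) by blast
qed

lemma unique_result: "Inv m C \<Longrightarrow> topple_step\<^sup>*\<^sup>* C D \<Longrightarrow> stable D \<Longrightarrow> topple_step\<^sup>*\<^sup>* C D' \<Longrightarrow> stable D' \<Longrightarrow> D = D'"
  by (metis det rtranclp_imp_relpowp)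



abbreviation sg :: "nat list \<Rightarrow> nat set list" where "sg xs \<equiv> map (\<lambda>x. {x}) xs"

definition initL :: "nat list \<Rightarrow> nat \<Rightarrow> nat \<Rightarrow> nat list \<Rightarrow> nat set list" where
  "initL X a b Z = [{}] @ sg X @ [{a, b}] @ sg Z @ [{}]"

lemma initL_nth:
  assumes "length X = p - 1" "length Z = m - p" "1 \<le> p" "p \<le> m" "k < m + 2"
  shows "initL X a b Z ! k = (if 1 \<le> k \<and> k < p then {X ! (k - 1)} else if k = p then {a, b}
      else if p < k \<and> k \<le> m then {Z ! (k - p - 1)} else {})"
proof -
  consider "k = 0" | "1 \<le> k \<and> k < p" | "k = p" | "p < k \<and> k \<le> m" | "k = m + 1" using assms by linarith
  then show ?thesis
  proof cases
    case 1 then show ?thesis unfolding initL_def using assms by simp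
  next
    case 2
    have h: "k - 1 < length X" using 2 assms by linarith
    from 2 have "initL X a b Z ! k = (sg X @ [{a, b}] @ sg Z @ [{}]) ! (k - 1)"
      unfolding initL_def by (simp add: nth_Cons')
    also have "\<dots> = {X ! (k - 1)}" using h by (simp add: nth_append)
    finally show ?thesis using 2 by simp
  next
    case 3
    then have "initL X a b Z ! k = (sg X @ [{a, b}] @ sg Z @ [{}]) ! (k - 1)"
      unfolding initL_def using assms by (simp add: nth_Cons')
    also have "\<dots> = {a, b}" using 3 assms by (simp add: nth_append)
    finally show ?thesis using 3 by simp
  next
    case 4
    then have "initL X a b Z ! k = (sg X @ [{a, b}] @ sg Z @ [{}]) ! (k - 1)"
      unfolding initL_def using assms by (simp add: nth_Cons')
    also have "\<dots> = {Z ! (k - p - 1)}"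
    proof -
      have h1: "\<not> k - 1 < length X" "k - 1 - length X = Suc (k - p - 1)" "k - p - 1 < length Z"
        using 4 assms by linarith+
      then show ?thesis by (simp add: nth_append)
    qed
    finally show ?thesis using 4 by simp
  next
    case 5
    then have "initL X a b Z ! k = (sg X @ [{a, b}] @ sg Z @ [{}]) ! (k - 1)"
      unfolding initL_def using assms by (simp add: nth_Cons')
    also have "\<dots> = {}" using 5 assms by (simp add: nth_append nth_Cons')
    finally show ?thesis using 5 assms by simp
  qed
qed

lemma initL_len: "length X = p - 1 \<Longrightarrow> length Z = m - p \<Longrightarrow> 1 \<le> p \<Longrightarrow> p \<le> m \<Longrightarrow> length (initL X a b Z) = m + 2"
  unfolding initL_def by simp

lemma lconf_init:
  assumes "length X = p - 1" "length Z = m - p" "1 \<le> p" "p \<le> m"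
  shows "lconf (initL X a b Z) i = (if 1 \<le> i \<and> i < int p then {X ! (nat i - 1)} else if i = int p then {a, b}
      else if int p < i \<and> i \<le> int m then {Z ! (nat i - p - 1)} else {})"
proof (cases "0 \<le> i \<and> i < int m + 2")
  case True
  have "lconf (initL X a b Z) i = initL X a b Z ! nat i"
    unfolding lconf_def using True initL_len[OF assms] by simp
  also have "\<dots> = (if 1 \<le> nat i \<and> nat i < p then {X ! (nat i - 1)} else if nat i = p then {a, b}
      else if p < nat i \<and> nat i \<le> m then {Z ! (nat i - p - 1)} else {})"
    using initL_nth[OF assms, of "nat i" a b] True by linarith
  finally show ?thesis using True assms by (auto simp: nat_less_iff le_nat_iff)
next
  case False
  then show ?thesis unfolding lconf_def using initL_len[OF assms] assms by auto
qed


lemma lconf_nonempty: "lconf L i \<noteq> {} \<Longrightarrow> 0 \<le> i \<and> i < int (length L)"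
  unfolding lconf_def by (auto split: if_splits)

lemma lconf_in: "0 \<le> i \<Longrightarrow> i < int (length L) \<Longrightarrow> lconf L i \<in> set L"
  unfolding lconf_def by (simp add: nat_less_iff)

lemma UN_lconf: "\<Union> (range (lconf L)) = \<Union> (set L)"
proof
  show "\<Union> (range (lconf L)) \<subseteq> \<Union> (set L)"
  proof
    fix x assume "x \<in> \<Union> (range (lconf L))"
    then obtain i where "x \<in> lconf L i" by blast
    moreover then have "0 \<le> i \<and> i < int (length L)" using lconf_nonempty by blast
    ultimately show "x \<in> \<Union> (set L)" using lconf_in by blast
  qed
next
  show "\<Union> (set L) \<subseteq> \<Union> (range (lconf L))"
  proof
    fix x assume "x \<in> \<Union> (set L)"
    then obtain k where k: "k < length L" "x \<in> L ! k" by (auto simp: in_set_conv_nth)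
    then have "lconf L (int k) = L ! k" unfolding lconf_def by simp
    then have "x \<in> lconf L (int k)" using k by simp
    then show "x \<in> \<Union> (range (lconf L))" by blast
  qed
qed

lemma reading_lconf: "length L = m + 2 \<Longrightarrow> reading m (lconf L) = concat (map sorted_list_of_set L)"
proof -
  assume l: "length L = m + 2"
  have "map (\<lambda>i. sorted_list_of_set (lconf L (int i))) [0..<m + 2] = map sorted_list_of_set L"
    by (rule nth_equalityI) (simp_all add: l lconf_def del: upt_Suc)
  then show ?thesis unfolding reading_def by simp
qed

lemma concat_sg: "concat (map sorted_list_of_set (sg xs)) = xs"
  by (induction xs) auto

lemma concat_sg': "concat (map (\<lambda>x. [x]) xs) = xs"
  by (induction xs) auto

lemma final_props:
  assumes "length os + length Qf = m"
  shows "stable (lconf (sg os @ [{}] @ sg Qf @ [{Bf}]))"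
    "\<forall>i. lconf (sg os @ [{}] @ sg Qf @ [{Bf}]) i \<noteq> {} \<longrightarrow> 0 \<le> i \<and> i \<le> int m + 1"
    "reading m (lconf (sg os @ [{}] @ sg Qf @ [{Bf}])) = os @ Qf @ [Bf]"
proof -
  let ?L = "sg os @ [{}] @ sg Qf @ [{Bf}]"
  have l: "length ?L = m + 2" using assms by simp
  have "\<forall>A \<in> set ?L. card A \<le> 1" by auto
  then show "stable (lconf ?L)" unfolding stable_def
  proof (intro allI)
    fix i
    show "card (lconf ?L i) \<le> 1"
    proof (cases "lconf ?L i = {}")
      case True then show ?thesis by simp
    next
      case False
      then have "lconf ?L i \<in> set ?L" using lconf_in lconf_nonempty by blast
      then show ?thesis using \<open>\<forall>A \<in> set ?L. card A \<le> 1\<close> by blast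
    qed
  qed
  show "\<forall>i. lconf ?L i \<noteq> {} \<longrightarrow> 0 \<le> i \<and> i \<le> int m + 1"
    using lconf_nonempty[of ?L] l by fastforce
  show "reading m (lconf ?L) = os @ Qf @ [Bf]"
    unfolding reading_lconf[OF l] by (simp add: comp_def concat_sg')
qed

lemma run_topples_intro:
  assumes "length X = p - 1" "length Z = m - p" "1 \<le> p" "p \<le> m" "a < b" "distinct (X @ [a, b] @ Z)"
    "run X a b Z = (os, Qf, Bf)"
  shows "topples_to m (lconf (initL X a b Z)) (os @ Qf @ [Bf])"
proof -
  have path: "topple_step\<^sup>*\<^sup>* (lconf (sg [] @ [{}] @ sg X @ [{a,b}] @ sg Z @ [{}]))
                 (lconf (sg ([] @ os) @ [{}] @ sg Qf @ [{Bf}]))"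
    by (rule run_real) (use assms in auto)
  have len: "length os + length Qf = m" using run_len[of X a b Z] assms by simp
  show ?thesis unfolding topples_to_def
    using path final_props[OF len] by (intro exI[of _ "lconf (sg os @ [{}] @ sg Qf @ [{Bf}])"]) (simp add: initL_def)
qed

lemma run_topples_dest:
  assumes "length X = p - 1" "length Z = m - p" "1 \<le> p" "p \<le> m" "a < b" "distinct (X @ [a, b] @ Z)"
    "run X a b Z = (os, Qf, Bf)" "Inv m (lconf (initL X a b Z))" "topples_to m (lconf (initL X a b Z)) \<pi>"
  shows "\<pi> = os @ Qf @ [Bf]"
proof -
  have path: "topple_step\<^sup>*\<^sup>* (lconf (sg [] @ [{}] @ sg X @ [{a,b}] @ sg Z @ [{}]))
                 (lconf (sg ([] @ os) @ [{}] @ sg Qf @ [{Bf}]))"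
    by (rule run_real) (use assms in auto)
  have len: "length os + length Qf = m" using run_len[of X a b Z] assms by simp
  obtain D where D: "topple_step\<^sup>*\<^sup>* (lconf (initL X a b Z)) D" "stable D" "reading m D = \<pi>"
    using assms(9) unfolding topples_to_def by blast
  have "D = lconf (sg os @ [{}] @ sg Qf @ [{Bf}])"
    by (rule unique_result[OF assms(8) D(1) D(2)]) (use path final_props[OF len] in \<open>simp_all add: initL_def\<close>)
  then show ?thesis using D(3) final_props[OF len] by simp
qed



lemma pattern_init: "1 \<le> p \<Longrightarrow> p \<le> m \<Longrightarrow>
  Pattern m (\<lambda>i. if i = int p then 2 else if 1 \<le> i \<and> i \<le> int m then 1 else 0)"
  unfolding Pattern_def
proof (intro conjI allI impI)
  fix i :: int
  assume "1 \<le> p" "p \<le> m"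
  {
    assume "(if i = int p then 2 else if 1 \<le> i \<and> i \<le> int m then 1 else 0) = (2::nat)"
    then have "i = int p" by (auto split: if_splits)
    then show "\<exists>j\<ge>0. j < i \<and> (if j = int p then 2 else if 1 \<le> j \<and> j \<le> int m then 1 else 0) = (0::nat)"
      using \<open>1 \<le> p\<close> by (intro exI[of _ 0]) auto
  }
  {
    assume "(if i = int p then 2 else if 1 \<le> i \<and> i \<le> int m then 1 else 0) = (2::nat)"
    then have "i = int p" by (auto split: if_splits)
    then show "\<exists>k>i. k \<le> int m + 1 \<and> (if k = int p then 2 else if 1 \<le> k \<and> k \<le> int m then 1 else 0) = (0::nat)"
      using \<open>p \<le> m\<close> by (intro exI[of _ "int m + 1"]) auto
  }
  show "(i < 0 \<or> int m + 1 < i) \<Longrightarrow> (if i = int p then 2 else if 1 \<le> i \<and> i \<le> int m then 1 else 0) = (0::nat)"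
    using \<open>1 \<le> p\<close> \<open>p \<le> m\<close> by auto
  show "(if i = int p then 2 else if 1 \<le> i \<and> i \<le> int m then 1 else 0) \<le> (2::nat)" by auto
next
  fix h l :: int
  assume "h < l" "(if h = int p then 2 else if 1 \<le> h \<and> h \<le> int m then 1 else 0) = (2::nat)"
    "(if l = int p then 2 else if 1 \<le> l \<and> l \<le> int m then 1 else 0) = (2::nat)"
  then have False by (auto split: if_splits)
  then show "\<exists>k>h. k < l \<and> (if k = int p then 2 else if 1 \<le> k \<and> k \<le> int m then 1 else 0) = (0::nat)" ..
qed

lemma in_S_facts:
  assumes "in_S m p C"
  shows "\<forall>i. (i < 1 \<or> i > int m) \<longrightarrow> C i = {}"
    "\<forall>i. 1 \<le> i \<and> i \<le> int m \<and> i \<noteq> int p \<longrightarrow> card (C i) = 1"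
    "card (C (int p)) = 2" "\<forall>i j. i \<noteq> j \<longrightarrow> C i \<inter> C j = {}" "(\<Union>i. C i) = {1..m+1}"
    "1 \<le> p" "p \<le> m" "\<forall>i. finite (C i)"
proof -
  show e1: "\<forall>i. (i < 1 \<or> i > int m) \<longrightarrow> C i = {}" using assms unfolding in_S_def by blast
  show "\<forall>i. 1 \<le> i \<and> i \<le> int m \<and> i \<noteq> int p \<longrightarrow> card (C i) = 1" using assms unfolding in_S_def by blast
  show c2: "card (C (int p)) = 2" using assms unfolding in_S_def by blast
  show "\<forall>i j. i \<noteq> j \<longrightarrow> C i \<inter> C j = {}" using assms unfolding in_S_def by blast
  show u: "(\<Union>i. C i) = {1..m+1}" using assms unfolding in_S_def by blast
  have "C (int p) \<noteq> {}" using c2 by auto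
  then show "1 \<le> p" "p \<le> m" using e1 by force+
  show "\<forall>i. finite (C i)"
  proof
    fix i
    have "C i \<subseteq> {1..m+1}" using u by blast
    then show "finite (C i)" using finite_subset by blast
  qed
qed

lemma in_S_Inv: assumes "in_S m p C" shows "Inv m C"
proof -
  note F = in_S_facts[OF assms]
  have c: "(\<lambda>i. card (C i)) = (\<lambda>i. if i = int p then 2 else if 1 \<le> i \<and> i \<le> int m then 1 else 0)"
  proof
    fix i show "card (C i) = (if i = int p then 2 else if 1 \<le> i \<and> i \<le> int m then 1 else 0)"
      using F(1,2,3) by (cases "i < 1 \<or> i > int m") auto
  qed
  have U: "\<forall>x i j. x \<in> C i \<longrightarrow> x \<in> C j \<longrightarrow> i = j" using F(4) by blast
  show ?thesis unfolding Inv_def c using F(8) U pattern_init[OF F(6,7)] by blast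
qed


lemma card1_the: "card A = 1 \<Longrightarrow> A = {the_elem A}"
  by (metis card_1_singletonE the_elem_eq)

lemma extraction:
  assumes S: "in_S m p C"
  shows "\<exists>X a b Z. length X = p - 1 \<and> length Z = m - p \<and> a < b \<and> distinct (X @ [a, b] @ Z) \<and>
     set (X @ [a, b] @ Z) = {1..m+1} \<and> C = lconf (initL X a b Z)"
proof -
  note F = in_S_facts[OF S]
  define X where "X = map (\<lambda>j. the_elem (C (int j + 1))) [0..<p-1]"
  define Z where "Z = map (\<lambda>j. the_elem (C (int j + int p + 1))) [0..<m-p]"
  obtain a0 b0 where ab0: "C (int p) = {a0, b0}" "a0 \<noteq> b0" using F(3) by (meson card_2_iff)
  define a where "a = min a0 b0"
  define b where "b = max a0 b0"
  have ab: "C (int p) = {a, b}" "a < b" using ab0 unfolding a_def b_def by (auto simp: min_def max_def)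
  have lX: "length X = p - 1" and lZ: "length Z = m - p" unfolding X_def Z_def by simp_all
  have eq: "C = lconf (initL X a b Z)"
  proof
    fix i
    show "C i = lconf (initL X a b Z) i"
    proof -
      consider "1 \<le> i \<and> i < int p" | "i = int p" | "int p < i \<and> i \<le> int m" | "i < 1 \<or> i > int m" by linarith
      then show ?thesis
      proof cases
        case 1
        have h: "nat i - 1 < p - 1" "int (nat i - 1) + 1 = i" using 1 by auto
        have "X ! (nat i - 1) = the_elem (C i)" unfolding X_def using h by simp
        moreover have "card (C i) = 1" using F(2) 1 F(7) by auto
        ultimately show ?thesis using 1 lconf_init[OF lX lZ F(6,7)] card1_the by simp
      next
        case 2 then show ?thesis using lconf_init[OF lX lZ F(6,7)] ab by simp
      next
        case 3
        have h: "nat i - p - 1 < m - p" "int (nat i - p - 1) + int p + 1 = i" using 3 by auto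
        have "Z ! (nat i - p - 1) = the_elem (C i)" unfolding Z_def using h by simp
        moreover have "card (C i) = 1" using F(2) 3 by auto
        ultimately show ?thesis using 3 lconf_init[OF lX lZ F(6,7)] card1_the by simp
      next
        case 4 then show ?thesis using lconf_init[OF lX lZ F(6,7)] F(1) F(6) F(7) by auto
      qed
    qed
  qed
  have "set (X @ [a, b] @ Z) = \<Union> (set (initL X a b Z))" unfolding initL_def by auto
  also have "\<dots> = \<Union> (range C)" unfolding eq UN_lconf ..
  also have "\<dots> = {1..m+1}" using F(5) .
  finally have st: "set (X @ [a, b] @ Z) = {1..m+1}" .
  have "length (X @ [a, b] @ Z) = m + 1" using lX lZ F(6,7) by simp
  hence "distinct (X @ [a, b] @ Z)" using st by (intro card_distinct) simp
  then show ?thesis using lX lZ ab st eq by blast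
qed


definition adj :: "nat \<Rightarrow> nat \<Rightarrow> nat" where "adj r s = (if s < r then s else s + 1)"
definition unadj :: "nat \<Rightarrow> nat \<Rightarrow> nat" where "unadj r y = (if y < r then y else y - 1)"

lemma adj_ne: "adj r s \<noteq> r" unfolding adj_def by auto

lemma adj_inj: "adj r s = adj r t \<Longrightarrow> s = t" unfolding adj_def by (auto split: if_splits)

lemma adj_unadj: "y \<noteq> r \<Longrightarrow> adj r (unadj r y) = y" unfolding adj_def unadj_def by auto

lemma unadj_inj: "y \<noteq> r \<Longrightarrow> z \<noteq> r \<Longrightarrow> unadj r y = unadj r z \<Longrightarrow> y = z"
  using adj_unadj by metis

lemma is_perm_len: "is_perm m xs \<Longrightarrow> length xs = m"
  unfolding is_perm_def by (metis card_atLeastAtMost diff_Suc_1 distinct_card)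

lemma sigma_val: "length \<sigma> = m \<Longrightarrow> sigma_conf \<sigma> r p i =
   (if 1 \<le> i \<and> i \<le> int m then {adj r (\<sigma> ! (nat i - 1))} else {}) \<union> (if i = int p then {r} else {})"
  unfolding sigma_conf_def adj_def Let_def by simp

lemma in_S_sigma:
  assumes P: "is_perm m \<sigma>" and p: "1 \<le> p" "p \<le> m" and r: "1 \<le> r" "r \<le> m + 1"
  shows "in_S m p (sigma_conf \<sigma> r p)"
proof -
  have l: "length \<sigma> = m" using is_perm_len[OF P] .
  have d: "distinct \<sigma>" and st: "set \<sigma> = {1..m}" using P unfolding is_perm_def by auto
  note v = sigma_val[OF l, of r p]
  have mem: "x \<in> sigma_conf \<sigma> r p i \<longleftrightarrow> (1 \<le> i \<and> i \<le> int m \<and> x = adj r (\<sigma> ! (nat i - 1))) \<or> (i = int p \<and> x = r)" for x i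
    unfolding v by auto
  have A1: "\<forall>i. (i < 1 \<or> i > int m) \<longrightarrow> sigma_conf \<sigma> r p i = {}" using p by (auto simp: v)
  have A2: "\<forall>i. 1 \<le> i \<and> i \<le> int m \<and> i \<noteq> int p \<longrightarrow> card (sigma_conf \<sigma> r p i) = 1" by (auto simp: v)
  have A3: "card (sigma_conf \<sigma> r p (int p)) = 2" using p adj_ne[of r "\<sigma> ! (p - 1)"] by (auto simp: v)
  have A4: "\<forall>i j. i \<noteq> j \<longrightarrow> sigma_conf \<sigma> r p i \<inter> sigma_conf \<sigma> r p j = {}"
  proof (intro allI impI)
    fix i j :: int assume ij: "i \<noteq> j"
    show "sigma_conf \<sigma> r p i \<inter> sigma_conf \<sigma> r p j = {}"
    proof (rule ccontr)
      assume "sigma_conf \<sigma> r p i \<inter> sigma_conf \<sigma> r p j \<noteq> {}"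
      then obtain x where xi: "x \<in> sigma_conf \<sigma> r p i" and xj: "x \<in> sigma_conf \<sigma> r p j" by blast
      show False
      proof (cases "x = r")
        case True
        then have "i = int p" "j = int p" using xi xj adj_ne unfolding mem by metis+
        then show False using ij by simp
      next
        case False
        then have i: "1 \<le> i \<and> i \<le> int m \<and> x = adj r (\<sigma> ! (nat i - 1))"
          and j: "1 \<le> j \<and> j \<le> int m \<and> x = adj r (\<sigma> ! (nat j - 1))" using xi xj unfolding mem by auto
        then have "\<sigma> ! (nat i - 1) = \<sigma> ! (nat j - 1)" using adj_inj by metis
        moreover have "nat i - 1 < length \<sigma>" "nat j - 1 < length \<sigma>" using i j l by auto
        ultimately have "nat i - 1 = nat j - 1" using d nth_eq_iff_index_eq by blast
        then show False using i j ij by auto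
      qed
    qed
  qed
  have A5: "(\<Union>i. sigma_conf \<sigma> r p i) = {1..m+1}"
  proof
    show "(\<Union>i. sigma_conf \<sigma> r p i) \<subseteq> {1..m+1}"
    proof
      fix x assume "x \<in> (\<Union>i. sigma_conf \<sigma> r p i)"
      then obtain i where "x \<in> sigma_conf \<sigma> r p i" by blast
      then have "(1 \<le> i \<and> i \<le> int m \<and> x = adj r (\<sigma> ! (nat i - 1))) \<or> x = r" unfolding mem by auto
      then show "x \<in> {1..m+1}"
      proof
        assume a: "1 \<le> i \<and> i \<le> int m \<and> x = adj r (\<sigma> ! (nat i - 1))"
        then have "\<sigma> ! (nat i - 1) \<in> {1..m}" using st l by (metis nth_mem diff_less nat_le_iff le_eq_less_or_eq less_one not_le zero_less_nat_eq nat_int_comparison(2) order.strict_trans1 zero_less_diff of_nat_1 le0 le_less_trans)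
        then show ?thesis using a unfolding adj_def by auto
      qed (use r in auto)
    qed
  next
    show "{1..m+1} \<subseteq> (\<Union>i. sigma_conf \<sigma> r p i)"
    proof
      fix y assume y: "y \<in> {1..m+1}"
      show "y \<in> (\<Union>i. sigma_conf \<sigma> r p i)"
      proof (cases "y = r")
        case True then show ?thesis using mem[of r "int p"] by blast
      next
        case False
        define s where "s = unadj r y"
        have "s \<in> {1..m}" using y False r unfolding s_def unadj_def by auto
        then obtain k where k: "k < m" "\<sigma> ! k = s" using st l by (metis in_set_conv_nth)
        have "adj r s = y" unfolding s_def using adj_unadj False by simp
        then have "y \<in> sigma_conf \<sigma> r p (int (Suc k))" unfolding mem using k by (simp only: nat_int) auto
        then show ?thesis by blast
      qed
    qed
  qed
  show ?thesis unfolding in_S_def using A1 A2 A3 A4 A5 by blast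
qed


lemma construct:
  assumes lX: "length X = p - 1" and lZ: "length Z = m - p" and p: "1 \<le> p" "p \<le> m" and ab: "a < b"
    and d: "distinct (X @ [a, b] @ Z)" and st: "set (X @ [a, b] @ Z) = {1..m+1}" and rab: "r = a \<or> r = b"
    and rn: "run X a b Z = (os, Qf, Bf)"
  shows "\<exists>\<sigma>. is_perm m \<sigma> \<and> topples_to m (sigma_conf \<sigma> r p) (os @ Qf @ [Bf])"
proof -
  define oth where "oth = (if r = a then b else a)"
  define ys where "ys = X @ [oth] @ Z"
  define \<sigma> where "\<sigma> = map (unadj r) ys"
  have r_range: "r \<in> {1..m+1}" using st rab by auto
  have sys: "set ys = {1..m+1} - {r}" and dys: "distinct ys"
  proof -
    have dd: "distinct X" "distinct Z" "a \<notin> set X" "a \<notin> set Z" "b \<notin> set X" "b \<notin> set Z"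
      "set X \<inter> set Z = {}" using d by auto
    have ab': "a \<noteq> b" using ab by simp
    show "set ys = {1..m+1} - {r}"
    proof (cases "r = a")
      case True
      then have "ys = X @ [b] @ Z" unfolding ys_def oth_def by simp
      then show ?thesis using st True dd ab' by auto
    next
      case False
      then have "r = b" "ys = X @ [a] @ Z" using rab unfolding ys_def oth_def by auto
      then show ?thesis using st dd ab' by auto
    qed
    show "distinct ys"
    proof (cases "r = a")
      case True
      then have "ys = X @ [b] @ Z" unfolding ys_def oth_def by simp
      then show ?thesis using dd by simp
    next
      case False
      then have "ys = X @ [a] @ Z" using rab unfolding ys_def oth_def by auto
      then show ?thesis using dd by simp
    qed
  qed
  have ne: "\<forall>y \<in> set ys. y \<noteq> r" using sys by auto
  have l: "length \<sigma> = m" unfolding \<sigma>_def ys_def using lX lZ p by simp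
  have perm: "is_perm m \<sigma>"
  proof -
    have "inj_on (unadj r) (set ys)"
    proof (rule inj_onI)
      fix y z assume "y \<in> set ys" "z \<in> set ys" "unadj r y = unadj r z"
      then show "y = z" using unadj_inj[of y r z] ne by blast
    qed
    then have "distinct \<sigma>" unfolding \<sigma>_def using dys by (simp add: distinct_map)
    moreover have "set \<sigma> = {1..m}"
    proof
      show "set \<sigma> \<subseteq> {1..m}"
      proof
        fix x assume "x \<in> set \<sigma>"
        then obtain y where y: "y \<in> set ys" "x = unadj r y" unfolding \<sigma>_def by auto
        then have y2: "1 \<le> y" "y \<le> m + 1" "y \<noteq> r" using sys by auto
        have r2: "1 \<le> r" "r \<le> m + 1" using r_range by auto
        show "x \<in> {1..m}"
        proof (cases "y < r")
          case True then show ?thesis using y y2 r2 unfolding unadj_def by simp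
        next
          case False
          then have "x = y - 1" using y(2) unfolding unadj_def by simp
          then show ?thesis using y2 r2 False by simp arith
        qed
      qed
    next
      show "{1..m} \<subseteq> set \<sigma>"
      proof
        fix z assume z: "z \<in> {1..m}"
        show "z \<in> set \<sigma>"
        proof (cases "z < r")
          case True
          have "z \<in> {1..m+1} - {r}" using z True by auto
          then have "z \<in> set ys" "unadj r z = z" using sys True unfolding unadj_def by auto
          then show ?thesis unfolding \<sigma>_def set_map by (metis image_eqI)
        next
          case False
          have "z + 1 \<in> {1..m+1} - {r}" using z False by auto
          then have "z + 1 \<in> set ys" "unadj r (z + 1) = z" using sys False unfolding unadj_def by auto
          then show ?thesis unfolding \<sigma>_def set_map by (metis image_eqI)
        qed
      qed
    qed
    ultimately show ?thesis unfolding is_perm_def by simp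
  qed
  have eq: "sigma_conf \<sigma> r p = lconf (initL X a b Z)"
  proof
    fix i
    note v = sigma_val[OF l, of r p i]
    note w = lconf_init[OF lX lZ p, of a b i]
    consider "1 \<le> i \<and> i < int p" | "i = int p" | "int p < i \<and> i \<le> int m" | "i < 1 \<or> i > int m" by linarith
    then show "sigma_conf \<sigma> r p i = lconf (initL X a b Z) i"
    proof cases
      case 1
      have h: "nat i - 1 < length X" using 1 lX by auto
      have "\<sigma> ! (nat i - 1) = unadj r (X ! (nat i - 1))" unfolding \<sigma>_def ys_def using h l
        by (simp add: nth_append)
      moreover have "X ! (nat i - 1) \<noteq> r" using ne h unfolding ys_def by (auto simp: nth_mem)
      ultimately show ?thesis using v w 1 p adj_unadj by auto
    next
      case 2
      have h: "\<sigma> ! (nat i - 1) = unadj r oth" unfolding \<sigma>_def ys_def using 2 lX p l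
        by (simp add: nth_append)
      have "oth \<noteq> r" using ab rab unfolding oth_def by auto
      then have "adj r (unadj r oth) = oth" by (rule adj_unadj)
      moreover have "{oth, r} = {a, b}" using rab unfolding oth_def by auto
      ultimately show ?thesis using v w 2 p h by auto
    next
      case 3
      have h: "\<not> nat i - 1 < length X" "nat i - 1 - length X = Suc (nat i - p - 1)" "nat i - p - 1 < length Z"
        using 3 lX lZ p by auto
      have "\<sigma> ! (nat i - 1) = unadj r (Z ! (nat i - p - 1))" unfolding \<sigma>_def ys_def using h l 3
        by (simp add: nth_append)
      moreover have "Z ! (nat i - p - 1) \<noteq> r" using ne h unfolding ys_def by (auto simp: nth_mem)
      ultimately show ?thesis using v w 3 p adj_unadj by auto
    next
      case 4 then show ?thesis using v w p by auto
    qed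
  qed
  have "topples_to m (lconf (initL X a b Z)) (os @ Qf @ [Bf])"
    by (rule run_topples_intro[OF lX lZ p ab d rn])
  then show ?thesis using perm eq by auto
qed



lemma distinct_by_set: "length xs = length ys \<Longrightarrow> distinct ys \<Longrightarrow> set xs = set ys \<Longrightarrow> distinct xs"
  by (metis card_distinct distinct_card)

lemma back_lists:
  assumes lL: "length L = n - p" and lR: "length R = p" and p: "1 \<le> p" "p \<le> n - 1"
    and dLR: "distinct (L @ R)" and sL: "set L = {1..n-p}" and sR: "set R = {n-p+1..n}"
    and c1: "r \<le> n - p \<longrightarrow> ltr_max L r" and c2: "r > n - p \<longrightarrow> rtl_min R r"
  shows "\<exists>X a b Z. length X = p - 1 \<and> length Z = (n - 1) - p \<and> a < b \<and> distinct (X @ [a, b] @ Z) \<and>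
     set (X @ [a, b] @ Z) = {1..(n-1)+1} \<and> (r = a \<or> r = b) \<and> run X a b Z = (L, butlast R, last R)"
proof -
  have Lne: "L \<noteq> []" and Rne: "R \<noteq> []" using lL lR p by auto
  have lt: "\<And>x y. x \<in> set L \<Longrightarrow> y \<in> set R \<Longrightarrow> x < y" using sL sR by auto
  have Rdec: "butlast R @ [last R] = R" using Rne by simp
  have Ldec: "hd L # tl L = L" using Lne by simp
  have sLR: "set (L @ R) = {1..(n-1)+1}" using sL sR p by auto
  have dL: "distinct L" and dR: "distinct R" and dLR': "set L \<inter> set R = {}" using dLR by auto
  have lastR: "last R \<in> set R" using Rne by simp
  have hdL: "hd L \<in> set L" using Lne by simp
  have bR: "set (butlast R) \<subseteq> set R" by (meson in_set_butlastD subsetI)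
  have tL: "set (tl L) \<subseteq> set L" using Ldec by (metis set_subset_Cons)
  have lbR: "length (butlast R) = p - 1" using lR by simp
  have ltL: "length (tl L) = (n - 1) - p" using lL by simp
  have sR2: "set R = insert (last R) (set (butlast R))" using Rdec by (metis Un_insert_right append_Nil2 set_append list.set(2) list.set(1))
  have sL2: "set L = insert (hd L) (set (tl L))" using Ldec by (metis list.set(2))
  have basic: "run (butlast R) (hd L) (last R) (tl L) = (L, butlast R, last R)"
  proof -
    have "run (butlast R) (hd L) (last R) (tl L) = (hd L # tl L, butlast R, last R)"
      by (rule T_run) (use lt bR tL hdL lastR in blast)+
    then show ?thesis using Ldec by simp
  qed
  have basic_props: "length (butlast R) = p - 1 \<and> length (tl L) = (n - 1) - p \<and> hd L < last R \<and>
     distinct (butlast R @ [hd L, last R] @ tl L) \<and> set (butlast R @ [hd L, last R] @ tl L) = {1..(n-1)+1}"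
  proof -
    have s: "set (butlast R @ [hd L, last R] @ tl L) = set (L @ R)" using sR2 sL2 by auto
    have "length (butlast R @ [hd L, last R] @ tl L) = length (L @ R)" using Lne Rne by simp
    then show ?thesis using s distinct_by_set[OF _ dLR s] lbR ltL lt hdL lastR sLR by simp
  qed
  show ?thesis
  proof (cases "r \<le> n - p")
    case True
    then obtain j where j: "j < length L" "L ! j = r" "\<forall>k\<le>j. L ! k \<le> r" using c1 unfolding ltr_max_def by blast
    show ?thesis
    proof (cases "j = 0")
      case True
      then have "r = hd L" using j Lne by (simp add: hd_conv_nth)
      then show ?thesis using basic basic_props by blast
    next
      case False
      define Z where "Z = (tl L)[j - 1 := last R]"
      have j1: "j - 1 < length (tl L)" using j False by simp
      have tLj: "tl L ! (j - 1) = L ! j" using False j1 by (simp add: nth_tl)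
      have dtL: "distinct (tl L)" using dL by (simp add: distinct_tl)
      have hdr: "hd L < r"
      proof -
        have "hd L \<le> r" using j(3) Lne by (simp add: hd_conv_nth)
        moreover have "hd L \<noteq> r"
        proof -
          have "0 < length L" using Lne by simp
          then have "L ! 0 \<noteq> L ! j" using nth_eq_iff_index_eq[OF dL _ j(1)] False by simp
          then show ?thesis using j(2) Lne by (simp add: hd_conv_nth)
        qed
        ultimately show ?thesis by simp
      qed
      have run: "run (butlast R) (hd L) r Z = (L, butlast R, last R)"
      proof -
        define us where "us = take (j - 1) (tl L)"
        define vs where "vs = drop j (tl L)"
        have Zs: "Z = us @ last R # vs" unfolding Z_def us_def vs_def using upd_conv_take_nth_drop[OF j1] j1 False by simp
        have us_lt: "\<forall>u\<in>set us. u < r"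
        proof
          fix u assume "u \<in> set us"
          then obtain k where k: "k < j - 1" "u = tl L ! k" unfolding us_def using j1 by (auto simp: in_set_conv_nth)
          then have uk: "u = L ! Suc k" using j1 by (simp add: nth_tl)
          have "Suc k \<le> j" using k by simp
          then have ur: "u \<le> r" using j(3) uk by simp
          have sk: "Suc k \<noteq> j" using k by simp
          have skl: "Suc k < length L" using k j by linarith
          have "u \<noteq> r" using nth_eq_iff_index_eq[OF dL skl j(1)] sk j(2) uk by simp
          then show "u < r" using ur by simp
        qed
        have usL: "set us \<subseteq> set L" unfolding us_def using tL by (meson in_set_takeD subset_iff)
        have vsL: "set vs \<subseteq> set L" unfolding vs_def using tL by (meson in_set_dropD subset_iff)
        have rR: "r < last R" using lt j lastR by (metis nth_mem)
        have r2: "run (butlast R) (min r (last R)) (max r (last R)) vs = (r # vs, butlast R, last R)"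
        proof -
          have "run (butlast R) r (last R) vs = (r # vs, butlast R, last R)"
            by (rule T_run) (use lt bR vsL j lastR in \<open>auto simp: nth_mem\<close>)
          then show ?thesis using rR by (simp add: min_def max_def)
        qed
        have "run (butlast R) (hd L) r (us @ last R # vs) = (hd L # us @ r # vs, butlast R, last R)"
          by (rule T_prefix[OF _ us_lt r2]) (use lt bR usL hdL in blast)
        moreover have "hd L # us @ r # vs = L"
        proof -
          have "tl L = us @ tl L ! (j - 1) # vs" unfolding us_def vs_def using id_take_nth_drop[OF j1] j1 False by simp
          then show ?thesis using tLj j Ldec by simp
        qed
        ultimately show ?thesis using Zs by simp
      qed
      have sZ: "set Z = insert (last R) (set (tl L) - {r})" unfolding Z_def
        using set_update_distinct[OF dtL j1] tLj j by simp
      have rin: "r \<in> set (tl L)" using tLj j1 j by (metis nth_mem)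
      have s: "set (butlast R @ [hd L, r] @ Z) = set (L @ R)" using sR2 sL2 sZ rin by auto
      have "length (butlast R @ [hd L, r] @ Z) = length (L @ R)" using Lne Rne False j unfolding Z_def by simp
      then have d: "distinct (butlast R @ [hd L, r] @ Z)" using distinct_by_set[OF _ dLR s] by simp
      have lZ: "length Z = (n - 1) - p" unfolding Z_def using ltL by simp
      show ?thesis using run d s sLR lbR lZ hdr by (intro exI[of _ "butlast R"] exI[of _ "hd L"] exI[of _ r] exI[of _ Z]) auto
    qed
  next
    case False
    then obtain i where i: "i < length R" "R ! i = r" "\<forall>k. i \<le> k \<and> k < length R \<longrightarrow> r \<le> R ! k"
      using c2 unfolding rtl_min_def by auto
    show ?thesis
    proof (cases "i = p - 1")
      case True
      then have "r = last R" using i lR Rne by (simp add: last_conv_nth)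
      then show ?thesis using basic basic_props by blast
    next
      case False
      have ip: "i < length (butlast R)" using i False lR by simp
      define X where "X = (butlast R)[i := hd L]"
      have bRi: "butlast R ! i = r" using nth_butlast[OF ip] i by simp
      have dbR: "distinct (butlast R)" using dR by (simp add: distinct_butlast)
      have rlast: "r < last R"
      proof -
        have "i \<le> p - 1 \<and> p - 1 < length R" using ip lR p by simp
        then have "r \<le> R ! (p - 1)" using i(3) by blast
        then have "r \<le> last R" using lR Rne by (simp add: last_conv_nth)
        moreover have "r \<noteq> last R"
        proof -
          have "p - 1 < length R" using lR p by simp
          then have "R ! i \<noteq> R ! (p - 1)" using nth_eq_iff_index_eq[OF dR i(1)] False by simp
          then show ?thesis using i(2) lR Rne by (simp add: last_conv_nth)
        qed
        ultimately show ?thesis by simp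
      qed
      have b1: "bub X r = (hd L, butlast R)"
      proof -
        have inc: "\<forall>q. i < q \<and> q < length (butlast R) \<longrightarrow> butlast R ! i < butlast R ! q"
        proof (intro allI impI)
          fix q assume q: "i < q \<and> q < length (butlast R)"
          have "butlast R ! q = R ! q" using nth_butlast q by blast
          moreover have "r \<le> R ! q" using i(3) q by auto
          moreover have "R ! q \<noteq> r"
          proof -
            have "q < length R - 1" using q by simp
            then have "q < length R" by arith
            then show ?thesis using nth_eq_iff_index_eq[OF dR _ i(1)] q i(2) by simp
          qed
          ultimately show "butlast R ! i < butlast R ! q" using bRi by simp
        qed
        have "\<forall>q\<in>set (butlast R). hd L < q" using lt bR hdL by blast
        then show ?thesis unfolding X_def using bub_replace[OF ip inc] bRi by simp
      qed
      have run: "run X r (last R) (tl L) = (L, butlast R, last R)"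
      proof (cases "tl L")
        case Nil
        then have "L = [hd L]" using Ldec by simp
        then show ?thesis using Nil b1 by simp
      next
        case (Cons z zs)
        have zL: "z \<in> set L" "set zs \<subseteq> set L" using Cons tL by auto
        have zlt: "z < last R" using lt zL lastR by blast
        have "run (butlast R) z (last R) zs = (z # zs, butlast R, last R)"
          by (rule T_run) (use lt bR zL lastR in blast)+
        then have "run (butlast R) (min (last R) z) (max (last R) z) zs = (z # zs, butlast R, last R)"
          using zlt by (simp add: min_def max_def)
        then show ?thesis using Cons b1 Ldec by simp
      qed
      have sX: "set X = insert (hd L) (set (butlast R) - {r})" unfolding X_def
        using set_update_distinct[OF dbR ip] bRi by simp
      have rin: "r \<in> set (butlast R)" using bRi ip by (metis nth_mem)
      have s: "set (X @ [r, last R] @ tl L) = set (L @ R)" using sR2 sL2 sX rin by auto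
      have "length (X @ [r, last R] @ tl L) = length (L @ R)" using Lne Rne unfolding X_def by simp
      then have d: "distinct (X @ [r, last R] @ tl L)" using distinct_by_set[OF _ dLR s] by simp
      have lX: "length X = p - 1" unfolding X_def using lbR by simp
      show ?thesis using run d s sLR lX ltL rlast by (intro exI[of _ X] exI[of _ r] exI[of _ "last R"] exI[of _ "tl L"]) auto
    qed
  qed
qed



lemma part:
  assumes P: "is_perm n (os @ RR)" and l: "length os = n - p" and b: "\<forall>x\<in>set os. x + p \<le> n"
  shows "set os = {1..n-p}" "set RR = {n-p+1..n}"
proof -
  have d: "distinct (os @ RR)" and s: "set (os @ RR) = {1..n}" using P unfolding is_perm_def by auto
  have sub: "set os \<subseteq> {1..n-p}" using s b by fastforce
  have "card (set os) = n - p" using d l by (simp add: distinct_card)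
  then show so: "set os = {1..n-p}" using card_subset_eq[OF _ sub] by simp
  have "set RR = {1..n} - set os" using d s by auto
  then show "set RR = {n-p+1..n}" using so by auto
qed

lemma analysis:
  assumes S: "in_S (n - 1) p C" and T: "topples_to (n - 1) C \<pi>" and P: "is_perm n \<pi>"
    and n: "2 \<le> n" and p: "1 \<le> p" "p \<le> n - 1"
  shows "\<exists>os RR. \<pi> = os @ RR \<and> length os = n - p \<and> set os = {1..n-p} \<and> set RR = {n-p+1..n} \<and>
     (\<forall>e\<in>C (int p). good e os RR)"
proof -
  obtain X a b Z where XZ: "length X = p - 1" "length Z = (n - 1) - p" "a < b" "distinct (X @ [a, b] @ Z)"
     "set (X @ [a, b] @ Z) = {1..(n-1)+1}" "C = lconf (initL X a b Z)"
    using extraction[OF S] by blast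
  obtain os Qf Bf where rn: "run X a b Z = (os, Qf, Bf)" by (metis prod_cases3)
  have I: "Inv (n - 1) (lconf (initL X a b Z))" using in_S_Inv[OF S] XZ(6) by simp
  have pi: "\<pi> = os @ Qf @ [Bf]"
    by (rule run_topples_dest[OF XZ(1,2) p XZ(3,4) rn I]) (use T XZ(6) in simp)
  have lo: "length os = n - p" using run_len[of X a b Z] rn XZ(2) p n by simp
  have sub: "set (X @ [a, b] @ Z) \<subseteq> {1..n}" using XZ(5) n by simp
  have b: "\<forall>x\<in>set os. x + p \<le> n" using P1[OF XZ(4) sub XZ(3) rn] XZ(1) p by simp
  have P': "is_perm n (os @ (Qf @ [Bf]))" using P pi by simp
  note pt = part[OF P' lo b]
  have g: "\<forall>e\<in>C (int p). good e os (Qf @ [Bf])"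
  proof
    fix e assume "e \<in> C (int p)"
    then have "e = a \<or> e = b" using XZ(6) lconf_init[OF XZ(1,2) p, of a b "int p"] by simp
    then show "good e os (Qf @ [Bf])"
    proof
      assume "e = a" then show ?thesis using G1[OF XZ(4) _ _ rn] XZ(3) by simp
    next
      assume "e = b" then show ?thesis using G2[OF XZ(4) XZ(3) rn] by simp
    qed
  qed
  show ?thesis using pi lo pt g by blast
qed

theorem theorem2p13:
  fixes n p r :: nat and \<pi> :: "nat list"
  assumes "n \<ge> 2" and "1 \<le> p" and "p \<le> n - 1" and "1 \<le> r" and "r \<le> n"
    and "is_perm n \<pi>" and "p_resultant n p \<pi>"
  shows "(\<exists>\<sigma>. is_perm (n - 1) \<sigma> \<and> topples_to (n - 1) (sigma_conf \<sigma> r p) \<pi>) \<longleftrightarrow>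
         ((r \<le> n - p \<longrightarrow> ltr_max (take (n - p) \<pi>) r) \<and>
          (r > n - p \<longrightarrow> rtl_min (drop (n - p) \<pi>) r))"
proof
  assume "\<exists>\<sigma>. is_perm (n - 1) \<sigma> \<and> topples_to (n - 1) (sigma_conf \<sigma> r p) \<pi>"
  then obtain \<sigma> where s: "is_perm (n - 1) \<sigma>" "topples_to (n - 1) (sigma_conf \<sigma> r p) \<pi>" by blast
  have S: "in_S (n - 1) p (sigma_conf \<sigma> r p)" by (rule in_S_sigma[OF s(1)]) (use assms in auto)
  obtain os RR where A: "\<pi> = os @ RR" "length os = n - p" "set os = {1..n-p}" "set RR = {n-p+1..n}"
    "\<forall>e\<in>sigma_conf \<sigma> r p (int p). good e os RR"
    using analysis[OF S s(2) assms(6,1,2,3)] by blast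
  have l: "length \<sigma> = n - 1" using is_perm_len[OF s(1)] .
  have "r \<in> sigma_conf \<sigma> r p (int p)" using sigma_val[OF l, of r p "int p"] by simp
  then have g: "good r os RR" using A(5) by blast
  have tk: "take (n - p) \<pi> = os" "drop (n - p) \<pi> = RR" using A(1,2) by auto
  show "(r \<le> n - p \<longrightarrow> ltr_max (take (n - p) \<pi>) r) \<and> (r > n - p \<longrightarrow> rtl_min (drop (n - p) \<pi>) r)"
  proof (intro conjI impI)
    assume rl: "r \<le> n - p"
    have "\<not> rm r RR" using rm_set A(4) rl by fastforce
    then obtain j where j: "j < length os" "os ! j = r" "\<forall>i<j. os ! i < r" using g unfolding good_def by blast
    have "\<forall>k\<le>j. os ! k \<le> r" using j by (metis le_eq_less_or_eq less_imp_le)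
    then show "ltr_max (take (n - p) \<pi>) r" unfolding tk ltr_max_def using j by blast
  next
    assume rl: "r > n - p"
    have "\<not> (\<exists>j<length os. os ! j = r \<and> (\<forall>i<j. os ! i < r))" using A(3) rl by (auto simp: in_set_conv_nth[symmetric] dest!: nth_mem)
    then have "rm r RR" using g unfolding good_def by blast
    then show "rtl_min (drop (n - p) \<pi>) r" unfolding tk by (rule rm_rtl)
  qed
next
  assume c: "(r \<le> n - p \<longrightarrow> ltr_max (take (n - p) \<pi>) r) \<and> (r > n - p \<longrightarrow> rtl_min (drop (n - p) \<pi>) r)"
  obtain C where C: "in_S (n - 1) p C" "topples_to (n - 1) C \<pi>" using assms(7) unfolding p_resultant_def by blast
  obtain os RR where A: "\<pi> = os @ RR" "length os = n - p" "set os = {1..n-p}" "set RR = {n-p+1..n}"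
    using analysis[OF C assms(6,1,2,3)] by blast
  have tk: "take (n - p) \<pi> = os" "drop (n - p) \<pi> = RR" using A(1,2) by auto
  have lpi: "length \<pi> = n" using is_perm_len[OF assms(6)] .
  have lR: "length RR = p" using lpi A(1,2) assms by simp
  have d: "distinct (os @ RR)" using assms(6) A(1) unfolding is_perm_def by simp
  obtain X a b Z where B: "length X = p - 1" "length Z = (n - 1) - p" "a < b" "distinct (X @ [a, b] @ Z)"
     "set (X @ [a, b] @ Z) = {1..(n-1)+1}" "r = a \<or> r = b" "run X a b Z = (os, butlast RR, last RR)"
    using back_lists[OF A(2) lR assms(2,3) d A(3,4)] c unfolding tk by blast
  obtain \<sigma> where \<sigma>: "is_perm (n - 1) \<sigma>" "topples_to (n - 1) (sigma_conf \<sigma> r p) (os @ butlast RR @ [last RR])"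
    using construct[OF B(1,2) _ _ B(3,4,5,6,7)] assms by auto
  have "os @ butlast RR @ [last RR] = \<pi>" using A(1) lR assms(2) by (metis append_butlast_last_id append_assoc list.size(3) not_one_le_zero)
  then show "\<exists>\<sigma>. is_perm (n - 1) \<sigma> \<and> topples_to (n - 1) (sigma_conf \<sigma> r p) \<pi>" using \<sigma> by auto
qed


end
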